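(* Let $A$ be a finite dimensional algebra over an algebraically closed field $F$ of characteristic zero and let $P_1$, $P_2$ be presentations of $A$ by full algebras. Let $T_1\cong(T_1)_{ss}\oplus J_{T_1}$ be a full summand of $P_1$ and $T_2\cong(T_2)_{ss}\oplus J_{T_2}$ a full summand of $P_2$ with $(T_1)_{ss}\cong(T_2)_{ss}\cong U$. Let $T_1'=U\oplus J_{T_1}\oplus J_{T_2}$ be the fusion of $T_1$ and $T_2$, i.e. the subalgebra of $T_1\times T_2$ consisting of all pairs $(u+j_1,\varphi(u)+j_2)$ with $u\in(T_1)_{ss}$, $j_1\in J_{T_1}$, $j_2\in J_{T_2}$, where $\varphi:(T_1)_{ss}\to(T_2)_{ss}$ is a fixed isomorphism. Let $P_1'$ be the direct sum of full algebras obtained from $P_1$ by replacing the summand $T_1$ by $T_1'$. Then $P_1'$ is a presentation of $A$.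
   Context: For a finite dimensional algebra $T$ with Wedderburn–Malcev decomposition $T\cong T'_1\times\cdots\times T'_q\oplus J_T$, $T$ is full if, up to permuting simple components, $T'_1J_TT'_2\cdots J_TT'_q\neq0$. A presentation of $A$ by full algebras is a direct sum $T_1\oplus\cdots\oplus T_n$ of full algebras (with this decomposition fixed) which is PI-equivalent to $A$, i.e. has the same $T$-ideal of polynomial identities. *)

theory Defs
  imports "HOL-Computational_Algebra.Polynomial"
begin

record ('f, 'a) alg =
  acarrier :: "'a set"
  azero :: 'a
  aadd :: "'a \<Rightarrow> 'a \<Rightarrow> 'a"
  amul :: "'a \<Rightarrow> 'a \<Rightarrow> 'a"
  asmult :: "'f \<Rightarrow> 'a \<Rightarrow> 'a"

definition algebra :: "('f::field, 'a) alg \<Rightarrow> bool" where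
  "algebra A \<longleftrightarrow>
     azero A \<in> acarrier A \<and>
     (\<forall>x\<in>acarrier A. \<forall>y\<in>acarrier A. aadd A x y \<in> acarrier A \<and> amul A x y \<in> acarrier A) \<and>
     (\<forall>c. \<forall>x\<in>acarrier A. asmult A c x \<in> acarrier A) \<and>
     (\<forall>x\<in>acarrier A. \<forall>y\<in>acarrier A. \<forall>z\<in>acarrier A.
        aadd A (aadd A x y) z = aadd A x (aadd A y z) \<and>
        amul A (amul A x y) z = amul A x (amul A y z) \<and>
        amul A x (aadd A y z) = aadd A (amul A x y) (amul A x z) \<and>
        amul A (aadd A x y) z = aadd A (amul A x z) (amul A y z)) \<and>
     (\<forall>x\<in>acarrier A. \<forall>y\<in>acarrier A. aadd A x y = aadd A y x) \<and>
     (\<forall>x\<in>acarrier A. aadd A (azero A) x = x) \<and>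
     (\<forall>x\<in>acarrier A. \<exists>y\<in>acarrier A. aadd A x y = azero A) \<and>
     (\<forall>c d. \<forall>x\<in>acarrier A. \<forall>y\<in>acarrier A.
        asmult A c (aadd A x y) = aadd A (asmult A c x) (asmult A c y) \<and>
        asmult A (c + d) x = aadd A (asmult A c x) (asmult A d x) \<and>
        asmult A (c * d) x = asmult A c (asmult A d x) \<and>
        asmult A c (amul A x y) = amul A (asmult A c x) y \<and>
        asmult A c (amul A x y) = amul A x (asmult A c y)) \<and>
     (\<forall>x\<in>acarrier A. asmult A 1 x = x)"

definition lsum :: "('f, 'a) alg \<Rightarrow> 'a list \<Rightarrow> 'a" where
  "lsum A xs = foldr (aadd A) xs (azero A)"

fun lprod :: "('f, 'a) alg \<Rightarrow> 'a list \<Rightarrow> 'a" where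
  "lprod A [] = azero A"
| "lprod A [x] = x"
| "lprod A (x # y # zs) = amul A x (lprod A (y # zs))"

definition fin_dim :: "('f::field, 'a) alg \<Rightarrow> bool" where
  "fin_dim A \<longleftrightarrow> (\<exists>bs. set bs \<subseteq> acarrier A \<and>
     (\<forall>x\<in>acarrier A. \<exists>cs. length cs = length bs \<and> x = lsum A (map2 (asmult A) cs bs)))"

definition subalgebra :: "('f, 'a) alg \<Rightarrow> 'a set \<Rightarrow> bool" where
  "subalgebra A S \<longleftrightarrow> S \<subseteq> acarrier A \<and> azero A \<in> S \<and>
     (\<forall>x\<in>S. \<forall>y\<in>S. aadd A x y \<in> S \<and> amul A x y \<in> S) \<and>
     (\<forall>c. \<forall>x\<in>S. asmult A c x \<in> S)"

definition sub :: "('f, 'a) alg \<Rightarrow> 'a set \<Rightarrow> ('f, 'a) alg" where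
  "sub A S = A\<lparr>acarrier := S\<rparr>"

definition alg_ideal :: "('f, 'a) alg \<Rightarrow> 'a set \<Rightarrow> bool" where
  "alg_ideal A I \<longleftrightarrow> subalgebra A I \<and>
     (\<forall>x\<in>acarrier A. \<forall>y\<in>I. amul A x y \<in> I \<and> amul A y x \<in> I)"

definition nilpotent_set :: "('f, 'a) alg \<Rightarrow> 'a set \<Rightarrow> bool" where
  "nilpotent_set A I \<longleftrightarrow> (\<exists>m>0. \<forall>xs. length xs = m \<longrightarrow> set xs \<subseteq> I \<longrightarrow> lprod A xs = azero A)"

text \<open>Jacobson radical of a finite dimensional algebra: the largest nilpotent ideal
  (the union of all nilpotent ideals, which is itself a nilpotent ideal in finite dimension).\<close>
definition rad :: "('f, 'a) alg \<Rightarrow> 'a set" where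
  "rad A = \<Union>{I. alg_ideal A I \<and> nilpotent_set A I}"

definition simple_alg :: "('f, 'a) alg \<Rightarrow> bool" where
  "simple_alg A \<longleftrightarrow> (\<exists>x\<in>acarrier A. \<exists>y\<in>acarrier A. amul A x y \<noteq> azero A) \<and>
     (\<forall>I. alg_ideal A I \<longrightarrow> I = {azero A} \<or> I = acarrier A)"

text \<open>Wedderburn--Malcev decomposition T = (T'_1 x ... x T'_q) (+) J_T, given by the list of
  simple components T'_i (subalgebras of T, mutually orthogonal), such that T is the vector space
  direct sum of the T'_i and the radical.\<close>
definition wm_decomp :: "('f::field, 'a) alg \<Rightarrow> 'a set list \<Rightarrow> bool" where
  "wm_decomp T Ts \<longleftrightarrow>
     (\<forall>S\<in>set Ts. subalgebra T S \<and> simple_alg (sub T S)) \<and>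
     (\<forall>i<length Ts. \<forall>j<length Ts. i \<noteq> j \<longrightarrow>
        (\<forall>x\<in>Ts!i. \<forall>y\<in>Ts!j. amul T x y = azero T)) \<and>
     (\<forall>x\<in>acarrier T. \<exists>bs j. length bs = length Ts \<and> (\<forall>i<length Ts. bs!i \<in> Ts!i) \<and>
        j \<in> rad T \<and> x = aadd T (lsum T bs) j) \<and>
     (\<forall>bs j. length bs = length Ts \<and> (\<forall>i<length Ts. bs!i \<in> Ts!i) \<and> j \<in> rad T \<and>
        aadd T (lsum T bs) j = azero T \<longrightarrow> (\<forall>i<length Ts. bs!i = azero T) \<and> j = azero T)"

definition ss_part :: "('f, 'a) alg \<Rightarrow> 'a set list \<Rightarrow> 'a set" where
  "ss_part T Ts = {lsum T bs | bs. length bs = length Ts \<and> (\<forall>i<length Ts. bs!i \<in> Ts!i)}"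

fun alternate :: "'a list \<Rightarrow> 'a list \<Rightarrow> 'a list" where
  "alternate [t] [] = [t]"
| "alternate (t # ts) (j # js) = t # j # alternate ts js"
| "alternate _ _ = []"

text \<open>Full algebra: some ordering T'_1,...,T'_q of the simple components of a WM decomposition
  with T'_1 J T'_2 J ... J T'_q \<noteq> 0, i.e. some product t_1 j_1 t_2 ... j_{q-1} t_q \<noteq> 0.\<close>
definition full :: "('f::field, 'a) alg \<Rightarrow> bool" where
  "full T \<longleftrightarrow> algebra T \<and> fin_dim T \<and>
     (\<exists>Ts. wm_decomp T Ts \<and> Ts \<noteq> [] \<and>
        (\<exists>ts js. length ts = length Ts \<and> length js + 1 = length Ts \<and>
           (\<forall>i<length Ts. ts!i \<in> Ts!i) \<and> set js \<subseteq> rad T \<and>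
           lprod T (alternate ts js) \<noteq> azero T))"

text \<open>Noncommutative polynomials without constant term in variables x_0, x_1, ...:
  lists of (coefficient, monomial), a monomial being a nonempty word of variable indices.\<close>
type_synonym 'f ncpoly = "('f \<times> nat list) list"

definition eval_nc :: "('f, 'a) alg \<Rightarrow> 'f ncpoly \<Rightarrow> (nat \<Rightarrow> 'a) \<Rightarrow> 'a" where
  "eval_nc A f s = lsum A (map (\<lambda>(c, w). asmult A c (lprod A (map s w))) f)"

definition is_identity :: "('f, 'a) alg \<Rightarrow> 'f ncpoly \<Rightarrow> bool" where
  "is_identity A f \<longleftrightarrow> (\<forall>(c, w)\<in>set f. w \<noteq> []) \<and>
     (\<forall>s. (\<forall>i. s i \<in> acarrier A) \<longrightarrow> eval_nc A f s = azero A)"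

definition pi_equiv :: "('f, 'a) alg \<Rightarrow> ('f, 'b) alg \<Rightarrow> bool" where
  "pi_equiv A B \<longleftrightarrow> (\<forall>f. is_identity A f = is_identity B f)"

definition dsum :: "(nat \<Rightarrow> ('f, 'a) alg) \<Rightarrow> nat \<Rightarrow> ('f, nat \<Rightarrow> 'a) alg" where
  "dsum T n = \<lparr> acarrier = {g. (\<forall>i<n. g i \<in> acarrier (T i)) \<and> (\<forall>i\<ge>n. g i = undefined)},
     azero = (\<lambda>i. if i < n then azero (T i) else undefined),
     aadd = (\<lambda>g h i. if i < n then aadd (T i) (g i) (h i) else undefined),
     amul = (\<lambda>g h i. if i < n then amul (T i) (g i) (h i) else undefined),
     asmult = (\<lambda>c g i. if i < n then asmult (T i) c (g i) else undefined) \<rparr>"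

definition presentation :: "('f::field, 'a) alg \<Rightarrow> (nat \<Rightarrow> ('f, 'b) alg) \<Rightarrow> nat \<Rightarrow> bool" where
  "presentation A T n \<longleftrightarrow> (\<forall>i<n. full (T i)) \<and> pi_equiv A (dsum T n)"

definition prod_alg :: "('f, 'a) alg \<Rightarrow> ('f, 'b) alg \<Rightarrow> ('f, 'a \<times> 'b) alg" where
  "prod_alg A B = \<lparr> acarrier = acarrier A \<times> acarrier B,
     azero = (azero A, azero B),
     aadd = (\<lambda>(x1, y1) (x2, y2). (aadd A x1 x2, aadd B y1 y2)),
     amul = (\<lambda>(x1, y1) (x2, y2). (amul A x1 x2, amul B y1 y2)),
     asmult = (\<lambda>c (x, y). (asmult A c x, asmult B c y)) \<rparr>"

definition alg_iso :: "('f, 'a) alg \<Rightarrow> ('f, 'b) alg \<Rightarrow> ('a \<Rightarrow> 'b) \<Rightarrow> bool" where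
  "alg_iso A B h \<longleftrightarrow> bij_betw h (acarrier A) (acarrier B) \<and> h (azero A) = azero B \<and>
     (\<forall>x\<in>acarrier A. \<forall>y\<in>acarrier A. h (aadd A x y) = aadd B (h x) (h y) \<and>
        h (amul A x y) = amul B (h x) (h y)) \<and>
     (\<forall>c. \<forall>x\<in>acarrier A. h (asmult A c x) = asmult B c (h x))"

definition fusion :: "('f, 'a) alg \<Rightarrow> ('f, 'b) alg \<Rightarrow> 'a set \<Rightarrow> ('a \<Rightarrow> 'b) \<Rightarrow> ('f, 'a \<times> 'b) alg" where
  "fusion T1 T2 B1 \<phi> = (prod_alg T1 T2)\<lparr>acarrier :=
     {(aadd T1 u j1, aadd T2 (\<phi> u) j2) | u j1 j2. u \<in> B1 \<and> j1 \<in> rad T1 \<and> j2 \<in> rad T2}\<rparr>"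

end

theory Submission
  imports Defs
begin

locale falg =
  fixes A :: "('f::field, 'a) alg"
  assumes alg: "algebra A"
begin

abbreviation "C \<equiv> acarrier A"
abbreviation "z \<equiv> azero A"
abbreviation "ad \<equiv> aadd A"
abbreviation "mu \<equiv> amul A"
abbreviation "sm \<equiv> asmult A"

lemma zero_closed[simp,intro]: "z \<in> C" using alg by (simp add: algebra_def)
lemma add_closed[simp,intro]: "x \<in> C \<Longrightarrow> y \<in> C \<Longrightarrow> ad x y \<in> C" using alg by (simp add: algebra_def)
lemma mul_closed[simp,intro]: "x \<in> C \<Longrightarrow> y \<in> C \<Longrightarrow> mu x y \<in> C" using alg by (simp add: algebra_def)
lemma sm_closed[simp,intro]: "x \<in> C \<Longrightarrow> sm c x \<in> C" using alg by (simp add: algebra_def)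
lemma add_assoc: "x \<in> C \<Longrightarrow> y \<in> C \<Longrightarrow> w \<in> C \<Longrightarrow> ad (ad x y) w = ad x (ad y w)"
  using alg unfolding algebra_def by blast
lemma mul_assoc: "x \<in> C \<Longrightarrow> y \<in> C \<Longrightarrow> w \<in> C \<Longrightarrow> mu (mu x y) w = mu x (mu y w)"
  using alg unfolding algebra_def by blast
lemma distl: "x \<in> C \<Longrightarrow> y \<in> C \<Longrightarrow> w \<in> C \<Longrightarrow> mu x (ad y w) = ad (mu x y) (mu x w)"
  using alg unfolding algebra_def by blast
lemma distr: "x \<in> C \<Longrightarrow> y \<in> C \<Longrightarrow> w \<in> C \<Longrightarrow> mu (ad x y) w = ad (mu x w) (mu y w)"
  using alg unfolding algebra_def by blast
lemma add_comm: "x \<in> C \<Longrightarrow> y \<in> C \<Longrightarrow> ad x y = ad y x"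
  using alg unfolding algebra_def by blast
lemma zero_add[simp]: "x \<in> C \<Longrightarrow> ad z x = x"
  using alg unfolding algebra_def by blast
lemma add_zero[simp]: "x \<in> C \<Longrightarrow> ad x z = x"
proof -
  assume "x \<in> C" then have "ad x z = ad z x" using add_comm by simp
  then show ?thesis using \<open>x \<in> C\<close> by simp
qed
lemma neg_ex: "x \<in> C \<Longrightarrow> \<exists>y\<in>C. ad x y = z"
  using alg unfolding algebra_def by blast
lemma sm_add: "x \<in> C \<Longrightarrow> y \<in> C \<Longrightarrow> sm c (ad x y) = ad (sm c x) (sm c y)"
  using alg unfolding algebra_def by blast
lemma add_sm: "x \<in> C \<Longrightarrow> sm (c + d) x = ad (sm c x) (sm d x)"
  using alg unfolding algebra_def by blast
lemma sm_sm: "x \<in> C \<Longrightarrow> sm (c * d) x = sm c (sm d x)"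
  using alg unfolding algebra_def by blast
lemma sm_mul_left: "x \<in> C \<Longrightarrow> y \<in> C \<Longrightarrow> sm c (mu x y) = mu (sm c x) y"
  using alg unfolding algebra_def by blast
lemma sm_mul_right: "x \<in> C \<Longrightarrow> y \<in> C \<Longrightarrow> sm c (mu x y) = mu x (sm c y)"
  using alg unfolding algebra_def by blast
lemma sm_one[simp]: "x \<in> C \<Longrightarrow> sm 1 x = x"
  using alg unfolding algebra_def by blast

lemma add_left_cancel: "x \<in> C \<Longrightarrow> y \<in> C \<Longrightarrow> w \<in> C \<Longrightarrow> ad x y = ad x w \<Longrightarrow> y = w"
proof -
  assume h: "x \<in> C" "y \<in> C" "w \<in> C" "ad x y = ad x w"
  obtain n where n: "n \<in> C" "ad x n = z" using neg_ex h(1) by blast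
  have "ad n (ad x y) = ad n (ad x w)" using h by simp
  then have "ad (ad n x) y = ad (ad n x) w" using h n add_assoc by simp
  moreover have "ad n x = z" using n h add_comm by simp
  ultimately show ?thesis using h by simp
qed

lemma sm_zero_left[simp]: "x \<in> C \<Longrightarrow> sm 0 x = z"
proof -
  assume x: "x \<in> C"
  have "ad (sm 0 x) (sm 0 x) = ad (sm 0 x) z" using add_sm[OF x, of 0 0] x by simp
  then show ?thesis using add_left_cancel x by (meson sm_closed zero_closed)
qed

lemma neg_right[simp]: "x \<in> C \<Longrightarrow> ad x (sm (-1) x) = z"
proof -
  assume x: "x \<in> C"
  have "sm (1 + -1) x = ad (sm 1 x) (sm (-1) x)" by (rule add_sm[OF x])
  then show ?thesis using x by simp
qed

lemma neg_left[simp]: "x \<in> C \<Longrightarrow> ad (sm (-1) x) x = z"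
proof -
  assume "x \<in> C" then have "ad (sm (-1) x) x = ad x (sm (-1) x)" using add_comm by simp
  then show ?thesis using \<open>x \<in> C\<close> by simp
qed

lemma mul_zero_right[simp]: "x \<in> C \<Longrightarrow> mu x z = z"
proof -
  assume x: "x \<in> C"
  have "ad (mu x z) (mu x z) = ad (mu x z) z" using distl[OF x zero_closed zero_closed] x by simp
  then show ?thesis using add_left_cancel x by (meson mul_closed zero_closed)
qed

lemma mul_zero_left[simp]: "x \<in> C \<Longrightarrow> mu z x = z"
proof -
  assume x: "x \<in> C"
  have "ad (mu z x) (mu z x) = ad (mu z x) z" using distr[OF zero_closed zero_closed x] x by simp
  then show ?thesis using add_left_cancel x by (meson mul_closed zero_closed)
qed

lemma sm_zero_right[simp]: "sm c z = z"
proof -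
  have "ad (sm c z) (sm c z) = ad (sm c z) z" using sm_add[OF zero_closed zero_closed, of c] by simp
  then show ?thesis using add_left_cancel by (meson sm_closed zero_closed)
qed

lemma eq_sub: "a \<in> C \<Longrightarrow> b \<in> C \<Longrightarrow> ad a b = c \<Longrightarrow> a = ad c (sm (-1) b)"
proof -
  assume h: "a \<in> C" "b \<in> C" "ad a b = c"
  have "ad c (sm (-1) b) = ad a (ad b (sm (-1) b))" using h add_assoc[of a b "sm (-1) b"] by simp
  then show ?thesis using h by simp
qed

lemma sub_add: "a \<in> C \<Longrightarrow> b \<in> C \<Longrightarrow> ad b (ad a (sm (-1) b)) = a"
proof -
  assume h: "a \<in> C" "b \<in> C"
  have "ad b (ad a (sm (-1) b)) = ad (ad b a) (sm (-1) b)" using h add_assoc[of b a "sm (-1) b"] by simp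
  also have "\<dots> = ad (ad a b) (sm (-1) b)" using h add_comm[of a b] by simp
  also have "\<dots> = ad a (ad b (sm (-1) b))" using h add_assoc[of a b "sm (-1) b"] by simp
  finally show ?thesis using h by simp
qed

lemma add_swap4: "a \<in> C \<Longrightarrow> b \<in> C \<Longrightarrow> c \<in> C \<Longrightarrow> d \<in> C \<Longrightarrow>
   ad (ad a b) (ad c d) = ad (ad a c) (ad b d)"
proof -
  assume h: "a \<in> C" "b \<in> C" "c \<in> C" "d \<in> C"
  have "ad (ad a b) (ad c d) = ad a (ad b (ad c d))" using h add_assoc by simp
  also have "ad b (ad c d) = ad (ad b c) d" using h add_assoc by simp
  also have "ad b c = ad c b" using h add_comm by simp
  also have "ad (ad c b) d = ad c (ad b d)" using h add_assoc by simp
  also have "ad a (ad c (ad b d)) = ad (ad a c) (ad b d)" using h add_assoc by simp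
  finally show ?thesis .
qed

lemma lsum_Nil[simp]: "lsum A [] = z" by (simp add: lsum_def)
lemma lsum_Cons[simp]: "lsum A (x # xs) = ad x (lsum A xs)" by (simp add: lsum_def)

lemma lsum_closed[simp,intro]: "set xs \<subseteq> C \<Longrightarrow> lsum A xs \<in> C"
  by (induction xs) auto

lemma lsum_append: "set xs \<subseteq> C \<Longrightarrow> set ys \<subseteq> C \<Longrightarrow> lsum A (xs @ ys) = ad (lsum A xs) (lsum A ys)"
  by (induction xs) (auto simp: add_assoc)

lemma lsum_zeros: "\<forall>x\<in>set xs. x = z \<Longrightarrow> lsum A xs = z"
  by (induction xs) auto

lemma lsum_map2_add: "length xs = length ys \<Longrightarrow> set xs \<subseteq> C \<Longrightarrow> set ys \<subseteq> C \<Longrightarrow>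
   lsum A (map2 ad xs ys) = ad (lsum A xs) (lsum A ys)"
proof (induction xs arbitrary: ys)
  case Nil then show ?case by simp
next
  case (Cons x xs)
  then obtain y ys' where ys: "ys = y # ys'" by (cases ys) auto
  with Cons show ?case by (simp add: add_swap4)
qed

lemma lsum_sm: "set xs \<subseteq> C \<Longrightarrow> sm c (lsum A xs) = lsum A (map (sm c) xs)"
  by (induction xs) (auto simp: sm_add)

lemma mul_lsum: "x \<in> C \<Longrightarrow> set ys \<subseteq> C \<Longrightarrow> mu x (lsum A ys) = lsum A (map (mu x) ys)"
  by (induction ys) (auto simp: distl)

lemma lsum_mul: "y \<in> C \<Longrightarrow> set xs \<subseteq> C \<Longrightarrow> mu (lsum A xs) y = lsum A (map (\<lambda>x. mu x y) xs)"
  by (induction xs) (auto simp: distr)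

lemma lsum_single: "set xs \<subseteq> C \<Longrightarrow> j < length xs \<Longrightarrow> (\<forall>i<length xs. i \<noteq> j \<longrightarrow> xs ! i = z) \<Longrightarrow>
   lsum A xs = xs ! j"
proof (induction xs arbitrary: j)
  case Nil then show ?case by simp
next
  case (Cons x xs)
  show ?case
  proof (cases j)
    case 0
    have "\<forall>y\<in>set xs. y = z"
    proof
      fix y assume "y \<in> set xs"
      then obtain k where k: "k < length xs" "y = xs ! k" by (auto simp: in_set_conv_nth)
      then show "y = z" using Cons.prems(3)[rule_format, of "Suc k"] 0 by simp
    qed
    then show ?thesis using 0 Cons.prems lsum_zeros by auto
  next
    case (Suc k)
    have "x = z" using Cons.prems(3)[rule_format, of 0] Suc by simp
    moreover have "lsum A xs = xs ! k"
    proof (rule Cons.IH)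
      show "set xs \<subseteq> C" "k < length xs" using Cons.prems Suc by auto
      show "\<forall>i<length xs. i \<noteq> k \<longrightarrow> xs ! i = z"
        using Cons.prems(3) Suc by auto
    qed
    moreover have "xs ! k \<in> C" using Cons.prems Suc nth_mem[of k xs] by auto
    ultimately show ?thesis using Suc Cons.prems by simp
  qed
qed

lemma lprod_Cons: "ys \<noteq> [] \<Longrightarrow> lprod A (x # ys) = mu x (lprod A ys)"
  by (cases ys) auto

lemma lprod_closed_gen: "xs \<noteq> [] \<Longrightarrow> set xs \<subseteq> S \<Longrightarrow> (\<forall>x\<in>S. \<forall>y\<in>S. mu x y \<in> S) \<Longrightarrow> lprod A xs \<in> S"
proof (induction xs)
  case Nil then show ?case by simp
next
  case (Cons x xs) then show ?case by (cases "xs = []") (auto simp: lprod_Cons)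
qed

lemma lprod_closed[simp,intro]: "set xs \<subseteq> C \<Longrightarrow> lprod A xs \<in> C"
  by (cases "xs = []") (auto intro: lprod_closed_gen)

lemma lprod_append: "xs \<noteq> [] \<Longrightarrow> ys \<noteq> [] \<Longrightarrow> set xs \<subseteq> C \<Longrightarrow> set ys \<subseteq> C \<Longrightarrow>
  lprod A (xs @ ys) = mu (lprod A xs) (lprod A ys)"
proof (induction xs)
  case Nil then show ?case by simp
next
  case (Cons x xs)
  show ?case
  proof (cases "xs = []")
    case True then show ?thesis using Cons.prems by (simp add: lprod_Cons)
  next
    case False
    then show ?thesis using Cons by (simp add: lprod_Cons mul_assoc)
  qed
qed

end


lemma ball_img: "(\<forall>x\<in>f ` S. P x) = (\<forall>x\<in>S. P (f x))" by auto
lemma bex_img: "(\<exists>x\<in>f ` S. P x) = (\<exists>x\<in>S. P (f x))" by auto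

lemma sub_simps[simp]: "acarrier (sub A S) = S" "azero (sub A S) = azero A" "aadd (sub A S) = aadd A"
  "amul (sub A S) = amul A" "asmult (sub A S) = asmult A"
  by (simp_all add: sub_def)

lemma lsum_sub[simp]: "lsum (sub A S) xs = lsum A xs" by (simp add: lsum_def)
lemma lprod_sub[simp]: "lprod (sub A S) xs = lprod A xs"
  by (induction A xs rule: lprod.induct) auto
lemma eval_sub[simp]: "eval_nc (sub A S) f s = eval_nc A f s" by (simp add: eval_nc_def)

lemma lsum_Nil'[simp]: "lsum B [] = azero B" by (simp add: lsum_def)
lemma lsum_Cons'[simp]: "lsum B (x # xs) = aadd B x (lsum B xs)" by (simp add: lsum_def)

definition ghom :: "('f, 'a) alg \<Rightarrow> ('f, 'b) alg \<Rightarrow> ('a \<Rightarrow> 'b) \<Rightarrow> bool" where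
  "ghom A B h \<longleftrightarrow> h (azero A) = azero B \<and> (\<forall>x y. h (aadd A x y) = aadd B (h x) (h y)) \<and>
     (\<forall>x y. h (amul A x y) = amul B (h x) (h y)) \<and> (\<forall>c x. h (asmult A c x) = asmult B c (h x))"

lemma ghom_lsum: "ghom A B h \<Longrightarrow> h (lsum A xs) = lsum B (map h xs)"
  by (induction xs) (auto simp: ghom_def lsum_def)

lemma ghom_lprod: "ghom A B h \<Longrightarrow> h (lprod A xs) = lprod B (map h xs)"
  by (induction A xs rule: lprod.induct) (auto simp: ghom_def)

lemma ghom_eval: "ghom A B h \<Longrightarrow> h (eval_nc A f s) = eval_nc B f (h \<circ> s)"
proof -
  assume g: "ghom A B h"
  have sm: "\<And>c x. h (asmult A c x) = asmult B c (h x)" using g by (simp add: ghom_def)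
  show ?thesis unfolding eval_nc_def
    by (simp add: ghom_lsum[OF g] ghom_lprod[OF g] sm comp_def split_def)
qed

definition hom_on :: "('f, 'a) alg \<Rightarrow> ('f, 'b) alg \<Rightarrow> ('a \<Rightarrow> 'b) \<Rightarrow> bool" where
  "hom_on A B h \<longleftrightarrow> h (azero A) = azero B \<and>
     (\<forall>x\<in>acarrier A. \<forall>y\<in>acarrier A. h (aadd A x y) = aadd B (h x) (h y) \<and> h (amul A x y) = amul B (h x) (h y)) \<and>
     (\<forall>c. \<forall>x\<in>acarrier A. h (asmult A c x) = asmult B c (h x))"

lemma iso_hom_on: "alg_iso A B h \<Longrightarrow> hom_on A B h"
  by (simp add: alg_iso_def hom_on_def)

context falg begin

lemma hom_on_lsum: "hom_on A B h \<Longrightarrow> set xs \<subseteq> C \<Longrightarrow> h (lsum A xs) = lsum B (map h xs)"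
  by (induction xs) (auto simp: hom_on_def)

lemma hom_on_lprod: "hom_on A B h \<Longrightarrow> set xs \<subseteq> C \<Longrightarrow> h (lprod A xs) = lprod B (map h xs)"
proof (induction xs)
  case Nil then show ?case by (simp add: hom_on_def)
next
  case (Cons x xs)
  show ?case
  proof (cases "xs = []")
    case True then show ?thesis by simp
  next
    case False
    then obtain y ys where "xs = y # ys" by (cases xs) auto
    then show ?thesis using Cons lprod_closed[of xs] by (auto simp: hom_on_def)
  qed
qed

lemma lprod_map_closed[simp,intro]: "(\<forall>i. s i \<in> C) \<Longrightarrow> lprod A (map s w) \<in> C"
  by (rule lprod_closed) auto

lemma eval_closed: "(\<forall>i. s i \<in> C) \<Longrightarrow> eval_nc A f s \<in> C"
  unfolding eval_nc_def by (rule lsum_closed) auto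

lemma hom_on_eval: "hom_on A B h \<Longrightarrow> (\<forall>i. s i \<in> C) \<Longrightarrow> h (eval_nc A f s) = eval_nc B f (h \<circ> s)"
  unfolding eval_nc_def
proof -
  assume h: "hom_on A B h" and s: "\<forall>i. s i \<in> C"
  have "h (lsum A (map (\<lambda>(c, w). sm c (lprod A (map s w))) f)) =
     lsum B (map h (map (\<lambda>(c, w). sm c (lprod A (map s w))) f))"
    by (rule hom_on_lsum[OF h]) (use s lprod_map_closed in auto)
  also have "map h (map (\<lambda>(c, w). sm c (lprod A (map s w))) f) =
     map (\<lambda>(c, w). asmult B c (lprod B (map (h \<circ> s) w))) f"
  proof (unfold map_map, rule map_cong[OF refl])
    fix cw assume "cw \<in> set f"
    obtain c w where cw: "cw = (c, w)" by (cases cw)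
    have "h (sm c (lprod A (map s w))) = asmult B c (h (lprod A (map s w)))"
      using h s lprod_closed[of "map s w"] by (auto simp: hom_on_def)
    also have "h (lprod A (map s w)) = lprod B (map (h \<circ> s) w)"
      using hom_on_lprod[OF h, of "map s w"] s by auto
    finally show "(h \<circ> (\<lambda>(c, w). sm c (lprod A (map s w)))) cw = (\<lambda>(c, w). asmult B c (lprod B (map (h \<circ> s) w))) cw"
      using cw by simp
  qed
  finally show "h (lsum A (map (\<lambda>(c, w). sm c (lprod A (map s w))) f)) =
     lsum B (map (\<lambda>(c, w). asmult B c (lprod B (map (h \<circ> s) w))) f)" .
qed

lemma identity_surj:
  assumes h: "hom_on A B h" and surj: "\<forall>y\<in>acarrier B. \<exists>x\<in>C. h x = y"
    and id: "is_identity A f"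
  shows "is_identity B f"
  unfolding is_identity_def
proof (intro conjI allI impI)
  show "\<forall>(c, w)\<in>set f. w \<noteq> []" using id by (simp add: is_identity_def)
  fix s assume s: "\<forall>i::nat. s i \<in> acarrier B"
  define s' where "s' i = (SOME x. x \<in> C \<and> h x = s i)" for i
  have s': "s' i \<in> C \<and> h (s' i) = s i" for i
    unfolding s'_def by (rule someI_ex) (use surj s in blast)
  have "h \<circ> s' = s" using s' by auto
  then have "eval_nc B f s = h (eval_nc A f s')" using hom_on_eval[OF h] s' by auto
  also have "eval_nc A f s' = z" using id s' by (auto simp: is_identity_def)
  finally show "eval_nc B f s = azero B" using h by (simp add: hom_on_def)
qed

lemma ideal_sub: "alg_ideal A I \<Longrightarrow> I \<subseteq> C" by (simp add: alg_ideal_def subalgebra_def)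

lemma zero_ideal: "alg_ideal A {z}" "nilpotent_set A {z}"
  unfolding alg_ideal_def subalgebra_def nilpotent_set_def
   apply auto
  apply (rule exI[of _ 1])
  apply auto
  by (metis One_nat_def length_0_conv length_Suc_conv lprod.simps(2) singletonD subset_code(1) list.set_intros(1))

lemma rad_sub: "rad A \<subseteq> C" unfolding rad_def using ideal_sub by blast

lemma zero_rad[simp,intro]: "z \<in> rad A" unfolding rad_def using zero_ideal by blast

lemma nil_long:
  assumes I: "alg_ideal A I" "nilpotent_set A I"
  shows "\<exists>m>0. \<forall>xs. length xs \<ge> m \<longrightarrow> set xs \<subseteq> I \<longrightarrow> lprod A xs = z"
proof -
  obtain m where m: "m > 0" "\<forall>xs. length xs = m \<longrightarrow> set xs \<subseteq> I \<longrightarrow> lprod A xs = z"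
    using I(2) by (auto simp: nilpotent_set_def)
  have IC: "I \<subseteq> C" using ideal_sub I by simp
  show ?thesis
  proof (intro exI[of _ m] conjI allI impI)
    fix xs :: "'a list" assume l: "length xs \<ge> m" and s: "set xs \<subseteq> I"
    show "lprod A xs = z"
    proof (cases "length xs = m")
      case True then show ?thesis using m s by simp
    next
      case False
      let ?k = "length xs - m"
      have d: "lprod A (drop ?k xs) = z" using m(2)[rule_format, of "drop ?k xs"] l s set_drop_subset[of ?k xs] by auto
      have "lprod A xs = lprod A (take ?k xs @ drop ?k xs)" by simp
      also have "\<dots> = mu (lprod A (take ?k xs)) (lprod A (drop ?k xs))"
        apply (rule lprod_append)
        using False l m s IC by (auto dest!: in_set_takeD in_set_dropD)
      also have "\<dots> = z" using d s IC set_take_subset[of ?k xs] by (simp add: subset_iff)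
      finally show ?thesis .
    qed
  qed (use m in simp)
qed

lemma ideal_sum:
  assumes I: "alg_ideal A I" "nilpotent_set A I" and J: "alg_ideal A J" "nilpotent_set A J"
  defines "K \<equiv> {ad a b | a b. a \<in> I \<and> b \<in> J}"
  shows "alg_ideal A K \<and> nilpotent_set A K"
proof -
  have IC: "I \<subseteq> C" and JC: "J \<subseteq> C" using I J ideal_sub by auto
  have Iz: "z \<in> I" and Jz: "z \<in> J" using I J by (auto simp: alg_ideal_def subalgebra_def)
  have Iadd: "\<And>x y. x \<in> I \<Longrightarrow> y \<in> I \<Longrightarrow> ad x y \<in> I" using I by (auto simp: alg_ideal_def subalgebra_def)
  have Jadd: "\<And>x y. x \<in> J \<Longrightarrow> y \<in> J \<Longrightarrow> ad x y \<in> J" using J by (auto simp: alg_ideal_def subalgebra_def)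
  have Ism: "\<And>x c. x \<in> I \<Longrightarrow> sm c x \<in> I" using I by (auto simp: alg_ideal_def subalgebra_def)
  have Jsm: "\<And>x c. x \<in> J \<Longrightarrow> sm c x \<in> J" using J by (auto simp: alg_ideal_def subalgebra_def)
  have Il: "\<And>x y. x \<in> C \<Longrightarrow> y \<in> I \<Longrightarrow> mu x y \<in> I" and Ir: "\<And>x y. x \<in> C \<Longrightarrow> y \<in> I \<Longrightarrow> mu y x \<in> I"
    using I by (auto simp: alg_ideal_def)
  have Jl: "\<And>x y. x \<in> C \<Longrightarrow> y \<in> J \<Longrightarrow> mu x y \<in> J" and Jr: "\<And>x y. x \<in> C \<Longrightarrow> y \<in> J \<Longrightarrow> mu y x \<in> J"
    using J by (auto simp: alg_ideal_def)
  have KC: "K \<subseteq> C" using IC JC unfolding K_def by auto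
  have Kl: "mu x k \<in> K" if xk: "x \<in> C" "k \<in> K" for x k
  proof -
    obtain a b where ab: "k = ad a b" "a \<in> I" "b \<in> J" using xk unfolding K_def by auto
    have "a \<in> C" "b \<in> C" using ab IC JC by auto
    then have "mu x k = ad (mu x a) (mu x b)" using ab distl[of x a b] xk by auto
    then show ?thesis unfolding K_def using ab(2,3) xk(1) Il[of x a] Jl[of x b] by blast
  qed
  have Kr: "mu k x \<in> K" if xk: "x \<in> C" "k \<in> K" for x k
  proof -
    obtain a b where ab: "k = ad a b" "a \<in> I" "b \<in> J" using xk unfolding K_def by auto
    have "a \<in> C" "b \<in> C" using ab IC JC by auto
    then have "mu k x = ad (mu a x) (mu b x)" using ab distr[of a b x] xk by auto
    then show ?thesis unfolding K_def using ab(2,3) xk(1) Ir[of x a] Jr[of x b] by blast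
  qed
  have idK: "alg_ideal A K"
    unfolding alg_ideal_def subalgebra_def
  proof (intro conjI ballI allI)
    show "K \<subseteq> C" by (rule KC)
    show "z \<in> K" unfolding K_def using Iz Jz by force
    fix x y assume x: "x \<in> K" and y: "y \<in> K"
    obtain a b where ab: "x = ad a b" "a \<in> I" "b \<in> J" using x unfolding K_def by auto
    obtain a' b' where ab': "y = ad a' b'" "a' \<in> I" "b' \<in> J" using y unfolding K_def by auto
    have "a \<in> C" "b \<in> C" "a' \<in> C" "b' \<in> C" using ab ab' IC JC by auto
    then have "ad x y = ad (ad a a') (ad b b')" using ab ab' add_swap4[of a b a' b'] by auto
    then show "ad x y \<in> K" unfolding K_def using ab(2,3) ab'(2,3) Iadd[of a a'] Jadd[of b b'] by blast
    show "mu x y \<in> K" using Kl x y KC by auto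
  next
    fix c x assume x: "x \<in> K"
    obtain a b where ab: "x = ad a b" "a \<in> I" "b \<in> J" using x unfolding K_def by auto
    have "a \<in> C" "b \<in> C" using ab IC JC by auto
    then have "sm c x = ad (sm c a) (sm c b)" using ab sm_add by auto
    then show "sm c x \<in> K" unfolding K_def using ab(2,3) Ism[of a c] Jsm[of b c] by blast
  next
    fix x y assume "x \<in> C" "y \<in> K"
    then show "mu x y \<in> K" "mu y x \<in> K" using Kl Kr by auto
  qed
  obtain m where m: "m > 0" "\<forall>xs. length xs = m \<longrightarrow> set xs \<subseteq> I \<longrightarrow> lprod A xs = z"
    using I(2) by (auto simp: nilpotent_set_def)
  obtain n where n: "n > 0" "\<forall>xs. length xs = n \<longrightarrow> set xs \<subseteq> J \<longrightarrow> lprod A xs = z"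
    using J(2) by (auto simp: nilpotent_set_def)
  have c1: "xs \<noteq> [] \<Longrightarrow> set xs \<subseteq> K \<Longrightarrow>
     \<exists>as b. length as = length xs \<and> set as \<subseteq> I \<and> b \<in> J \<and> lprod A xs = ad (lprod A as) b" for xs
  proof (induction xs)
    case Nil then show ?case by simp
  next
    case (Cons x xs)
    obtain a b where ab: "x = ad a b" "a \<in> I" "b \<in> J" using Cons.prems unfolding K_def by auto
    show ?case
    proof (cases "xs = []")
      case True then show ?thesis using ab by (intro exI[of _ "[a]"] exI[of _ b]) auto
    next
      case False
      then obtain as B where h: "length as = length xs" "set as \<subseteq> I" "B \<in> J" "lprod A xs = ad (lprod A as) B"
        using Cons by auto
      have asne: "as \<noteq> []" using h(1) False by auto
      have P: "lprod A as \<in> I" using lprod_closed_gen[OF asne h(2)] I(1)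
        by (auto simp: alg_ideal_def subalgebra_def)
      have aC: "a \<in> C" "b \<in> C" "B \<in> C" "lprod A as \<in> C" using ab h P IC JC by auto
      have "lprod A (x # xs) = mu (ad a b) (ad (lprod A as) B)" using h False ab by (simp add: lprod_Cons)
      also have "\<dots> = ad (mu a (ad (lprod A as) B)) (mu b (ad (lprod A as) B))"
        using aC distr by auto
      also have "mu a (ad (lprod A as) B) = ad (mu a (lprod A as)) (mu a B)" using aC distl by auto
      also have "ad (ad (mu a (lprod A as)) (mu a B)) (mu b (ad (lprod A as) B)) =
          ad (mu a (lprod A as)) (ad (mu a B) (mu b (ad (lprod A as) B)))"
        using aC add_assoc by auto
      also have "mu a (lprod A as) = lprod A (a # as)" using asne by (simp add: lprod_Cons)
      finally have e: "lprod A (x # xs) = ad (lprod A (a # as)) (ad (mu a B) (mu b (ad (lprod A as) B)))" .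
      have "ad (mu a B) (mu b (ad (lprod A as) B)) \<in> J"
        using Jadd Jl Jr aC ab h by auto
      then show ?thesis using e h ab by (intro exI[of _ "a # as"]) auto
    qed
  qed
  have c2: "length xs = m \<Longrightarrow> set xs \<subseteq> K \<Longrightarrow> lprod A xs \<in> J" for xs
  proof -
    assume l: "length xs = m" and s: "set xs \<subseteq> K"
    then have "xs \<noteq> []" using m by auto
    then obtain as b where h: "length as = length xs" "set as \<subseteq> I" "b \<in> J" "lprod A xs = ad (lprod A as) b"
      using c1 s by blast
    then have "lprod A as = z" using m l by auto
    then show ?thesis using h JC by auto
  qed
  have c3: "length xs = Suc k * m \<Longrightarrow> set xs \<subseteq> K \<Longrightarrow>
     \<exists>ys. length ys = Suc k \<and> set ys \<subseteq> J \<and> lprod A xs = lprod A ys" for k xs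
  proof (induction k arbitrary: xs)
    case 0 then show ?case using c2 by (intro exI[of _ "[lprod A xs]"]) auto
  next
    case (Suc k)
    have l1: "length (take m xs) = m" "length (drop m xs) = Suc k * m" using Suc.prems by auto
    have s1: "set (take m xs) \<subseteq> K" "set (drop m xs) \<subseteq> K" using Suc.prems by (auto dest: in_set_takeD in_set_dropD)
    obtain ys where ys: "length ys = Suc k" "set ys \<subseteq> J" "lprod A (drop m xs) = lprod A ys"
      using Suc.IH[OF l1(2) s1(2)] by blast
    have ne: "take m xs \<noteq> []" "drop m xs \<noteq> []" using l1 m by auto
    have "lprod A xs = mu (lprod A (take m xs)) (lprod A (drop m xs))"
      using lprod_append[OF ne] s1 KC by (metis append_take_drop_id order_trans)
    also have "\<dots> = lprod A (lprod A (take m xs) # ys)"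
    proof -
      have "ys \<noteq> []" using ys(1) by auto
      then show ?thesis using ys(3) lprod_Cons[of ys "lprod A (take m xs)"] by simp
    qed
    finally show ?case using ys c2 l1 s1 by (intro exI[of _ "lprod A (take m xs) # ys"]) auto
  qed
  have "nilpotent_set A K"
    unfolding nilpotent_set_def
  proof (intro exI[of _ "n * m"] conjI allI impI)
    show "n * m > 0" using m n by simp
    fix xs :: "'a list" assume l: "length xs = n * m" and s: "set xs \<subseteq> K"
    obtain k where k: "n = Suc k" using n by (cases n) auto
    obtain ys where "length ys = n" "set ys \<subseteq> J" "lprod A xs = lprod A ys" using c3[of xs k] l s k by auto
    then show "lprod A xs = z" using n by simp
  qed
  then show ?thesis using idK by simp
qed

lemma rad_add: "x \<in> rad A \<Longrightarrow> y \<in> rad A \<Longrightarrow> ad x y \<in> rad A"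
proof -
  assume "x \<in> rad A" "y \<in> rad A"
  then obtain I J where "alg_ideal A I" "nilpotent_set A I" "x \<in> I" "alg_ideal A J" "nilpotent_set A J" "y \<in> J"
    unfolding rad_def by blast
  then show ?thesis using ideal_sum[of I J] unfolding rad_def by blast
qed

lemma rad_sm: "x \<in> rad A \<Longrightarrow> sm c x \<in> rad A"
  unfolding rad_def alg_ideal_def subalgebra_def by blast

lemma rad_mul: "x \<in> C \<Longrightarrow> y \<in> rad A \<Longrightarrow> mu x y \<in> rad A \<and> mu y x \<in> rad A"
  unfolding rad_def alg_ideal_def by blast

lemma rad_ideal: "alg_ideal A (rad A)"
  unfolding alg_ideal_def subalgebra_def using rad_sub rad_add rad_sm rad_mul rad_sub by blast

end


lemma map_alternate: "map f (alternate xs ys) = alternate (map f xs) (map f ys)"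
  by (induction xs ys rule: alternate.induct) auto

lemma set_alternate: "set (alternate xs ys) \<subseteq> set xs \<union> set ys"
  by (induction xs ys rule: alternate.induct) auto

lemma map_map2_hom: "(\<forall>b\<in>set bs. \<forall>c. h (f c b) = g c (h b)) \<Longrightarrow>
   map h (map2 f cs bs) = map2 g cs (map h bs)"
proof (induction cs arbitrary: bs)
  case Nil then show ?case by simp
next
  case (Cons c cs) then show ?case by (cases bs) auto
qed

lemma iso_facts:
  assumes "alg_iso A B h"
  shows "acarrier B = h ` acarrier A" "inj_on h (acarrier A)" "azero B = h (azero A)"
    "\<And>x y. x \<in> acarrier A \<Longrightarrow> y \<in> acarrier A \<Longrightarrow> aadd B (h x) (h y) = h (aadd A x y)"
    "\<And>x y. x \<in> acarrier A \<Longrightarrow> y \<in> acarrier A \<Longrightarrow> amul B (h x) (h y) = h (amul A x y)"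
    "\<And>x c. x \<in> acarrier A \<Longrightarrow> asmult B c (h x) = h (asmult A c x)"
  using assms unfolding alg_iso_def bij_betw_def by auto

lemma iso_algebra:
  assumes alg: "algebra A" and iso: "alg_iso A B h"
  shows "algebra B"
proof -
  interpret falg A by (rule falg.intro[OF alg])
  note F = iso_facts[OF iso]
  note R = F(3-6)
  show ?thesis
    unfolding algebra_def F(1) ball_img bex_img
  proof (intro conjI)
    show "\<forall>x\<in>C. \<forall>y\<in>C. \<forall>w\<in>C. aadd B (aadd B (h x) (h y)) (h w) = aadd B (h x) (aadd B (h y) (h w)) \<and>
        amul B (amul B (h x) (h y)) (h w) = amul B (h x) (amul B (h y) (h w)) \<and>
        amul B (h x) (aadd B (h y) (h w)) = aadd B (amul B (h x) (h y)) (amul B (h x) (h w)) \<and>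
        amul B (aadd B (h x) (h y)) (h w) = aadd B (amul B (h x) (h w)) (amul B (h y) (h w))"
    proof (intro ballI conjI)
      fix x y w assume C: "x \<in> C" "y \<in> C" "w \<in> C"
      show "aadd B (aadd B (h x) (h y)) (h w) = aadd B (h x) (aadd B (h y) (h w))"
        using C by (simp add: R add_assoc)
      show "amul B (amul B (h x) (h y)) (h w) = amul B (h x) (amul B (h y) (h w))"
        using C by (simp add: R mul_assoc)
      show "amul B (h x) (aadd B (h y) (h w)) = aadd B (amul B (h x) (h y)) (amul B (h x) (h w))"
        using C by (simp add: R distl)
      show "amul B (aadd B (h x) (h y)) (h w) = aadd B (amul B (h x) (h w)) (amul B (h y) (h w))"
        using C by (simp add: R distr)
    qed
    show "\<forall>x\<in>C. \<forall>y\<in>C. aadd B (h x) (h y) = aadd B (h y) (h x)"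
    proof (intro ballI)
      fix x y assume C: "x \<in> C" "y \<in> C"
      have "ad x y = ad y x" by (rule add_comm[OF C])
      then show "aadd B (h x) (h y) = aadd B (h y) (h x)" using C by (simp add: R)
    qed
    show "\<forall>x\<in>C. aadd B (azero B) (h x) = h x" by (simp add: R)
    show "\<forall>x\<in>C. \<exists>y\<in>C. aadd B (h x) (h y) = azero B"
    proof
      fix x assume x: "x \<in> C"
      have "aadd B (h x) (h (sm (-1) x)) = azero B" using x by (simp add: R)
      then show "\<exists>y\<in>C. aadd B (h x) (h y) = azero B" using x sm_closed by blast
    qed
    show "\<forall>c d. \<forall>x\<in>C. \<forall>y\<in>C. asmult B c (aadd B (h x) (h y)) = aadd B (asmult B c (h x)) (asmult B c (h y)) \<and>
        asmult B (c + d) (h x) = aadd B (asmult B c (h x)) (asmult B d (h x)) \<and>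
        asmult B (c * d) (h x) = asmult B c (asmult B d (h x)) \<and>
        asmult B c (amul B (h x) (h y)) = amul B (asmult B c (h x)) (h y) \<and>
        asmult B c (amul B (h x) (h y)) = amul B (h x) (asmult B c (h y))"
    proof (intro allI ballI conjI)
      fix c d x y assume C: "x \<in> C" "y \<in> C"
      show "asmult B c (aadd B (h x) (h y)) = aadd B (asmult B c (h x)) (asmult B c (h y))"
        using C by (simp add: R sm_add)
      show "asmult B (c + d) (h x) = aadd B (asmult B c (h x)) (asmult B d (h x))"
        using C by (simp add: R add_sm)
      show "asmult B (c * d) (h x) = asmult B c (asmult B d (h x))"
        using C by (simp add: R sm_sm)
      have "sm c (mu x y) = mu (sm c x) y" by (rule sm_mul_left[OF C])
      then show "asmult B c (amul B (h x) (h y)) = amul B (asmult B c (h x)) (h y)"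
        using C by (simp add: R)
      have "sm c (mu x y) = mu x (sm c y)" by (rule sm_mul_right[OF C])
      then show "asmult B c (amul B (h x) (h y)) = amul B (h x) (asmult B c (h y))"
        using C by (simp add: R)
    qed
    show "\<forall>x\<in>C. asmult B 1 (h x) = h x" by (simp add: R)
    show "azero B \<in> h ` C" using R by simp
    show "\<forall>x\<in>C. \<forall>y\<in>C. aadd B (h x) (h y) \<in> h ` C \<and> amul B (h x) (h y) \<in> h ` C"
      by (simp add: R)
    show "\<forall>c. \<forall>x\<in>C. asmult B c (h x) \<in> h ` C" by (simp add: R)
  qed
qed

lemma iso_inv:
  assumes alg: "algebra A" and iso: "alg_iso A B h"
  shows "alg_iso B A (inv_into (acarrier A) h)"
proof -
  interpret falg A by (rule falg.intro[OF alg])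
  note F = iso_facts[OF iso]
  have bij: "bij_betw h C (acarrier B)" using iso by (simp add: alg_iso_def)
  have ii: "\<And>x. x \<in> C \<Longrightarrow> inv_into C h (h x) = x" using F(2) inv_into_f_f by metis
  show ?thesis
    unfolding alg_iso_def
    apply (intro conjI)
    using bij_betw_inv_into[OF bij] apply simp
    unfolding F(1) ball_img
    by (simp_all add: F(3-6) ii)
qed

lemma iso_subalg:
  assumes alg: "algebra A" and iso: "alg_iso A B h" and S: "subalgebra A S"
  shows "subalgebra B (h ` S)"
proof -
  interpret falg A by (rule falg.intro[OF alg])
  note F = iso_facts[OF iso]
  have SC: "\<And>x. x \<in> S \<Longrightarrow> x \<in> C" using S by (auto simp: subalgebra_def)
  show ?thesis
    using S unfolding subalgebra_def F(1) ball_img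
    by (auto simp: F(3-6) SC)
qed

lemma iso_ideal:
  assumes alg: "algebra A" and iso: "alg_iso A B h" and I: "alg_ideal A I"
  shows "alg_ideal B (h ` I)"
proof -
  interpret falg A by (rule falg.intro[OF alg])
  note F = iso_facts[OF iso]
  have SC: "\<And>x. x \<in> I \<Longrightarrow> x \<in> C" using I by (auto simp: alg_ideal_def subalgebra_def)
  have "subalgebra B (h ` I)" using iso_subalg[OF alg iso] I by (simp add: alg_ideal_def)
  then show ?thesis
    using I unfolding alg_ideal_def F(1) ball_img
    by (auto simp: F(3-6) SC)
qed

lemma iso_nil:
  assumes alg: "algebra A" and iso: "alg_iso A B h" and I: "alg_ideal A I" "nilpotent_set A I"
  shows "nilpotent_set B (h ` I)"
proof -
  interpret falg A by (rule falg.intro[OF alg])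
  note F = iso_facts[OF iso]
  have SC: "\<And>x. x \<in> I \<Longrightarrow> x \<in> C" using I by (auto simp: alg_ideal_def subalgebra_def)
  obtain m where m: "m > 0" "\<forall>xs. length xs = m \<longrightarrow> set xs \<subseteq> I \<longrightarrow> lprod A xs = z"
    using I(2) by (auto simp: nilpotent_set_def)
  let ?g = "inv_into C h"
  have ii: "\<And>x. x \<in> C \<Longrightarrow> ?g (h x) = x" using F(2) inv_into_f_f by metis
  show ?thesis unfolding nilpotent_set_def
  proof (intro exI[of _ m] conjI allI impI)
    show "m > 0" by fact
    fix xs assume l: "length xs = m" and s: "set xs \<subseteq> h ` I"
    have e: "map h (map ?g xs) = xs"
      using s SC ii by (induction xs) auto
    have s': "set (map ?g xs) \<subseteq> I" using s SC ii by auto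
    have "h (lprod A (map ?g xs)) = lprod B (map h (map ?g xs))"
      by (rule hom_on_lprod[OF iso_hom_on[OF iso]]) (use s' SC in auto)
    then have "lprod B xs = h (lprod A (map ?g xs))" unfolding e by simp
    also have "lprod A (map ?g xs) = z" using m s' l by simp
    finally show "lprod B xs = azero B" using F(3) by simp
  qed
qed

lemma iso_rad_sub:
  assumes alg: "algebra A" and iso: "alg_iso A B h"
  shows "h ` rad A \<subseteq> rad B"
proof
  fix y assume "y \<in> h ` rad A"
  then obtain x I where "y = h x" "x \<in> I" "alg_ideal A I" "nilpotent_set A I" unfolding rad_def by auto
  then show "y \<in> rad B" unfolding rad_def using iso_ideal[OF alg iso] iso_nil[OF alg iso] by blast
qed

lemma iso_rad:
  assumes alg: "algebra A" and iso: "alg_iso A B h"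
  shows "rad B = h ` rad A"
proof
  show "h ` rad A \<subseteq> rad B" by (rule iso_rad_sub[OF alg iso])
  interpret falg A by (rule falg.intro[OF alg])
  have algB: "algebra B" by (rule iso_algebra[OF alg iso])
  interpret B: falg B by (rule falg.intro[OF algB])
  note F = iso_facts[OF iso]
  let ?g = "inv_into C h"
  have s: "?g ` rad B \<subseteq> rad A" by (rule iso_rad_sub[OF algB iso_inv[OF alg iso]])
  show "rad B \<subseteq> h ` rad A"
  proof
    fix y assume y: "y \<in> rad B"
    then have "y \<in> h ` C" using B.rad_sub F(1) by auto
    then have "h (?g y) = y" by (simp add: f_inv_into_f)
    moreover have "?g y \<in> rad A" using s y by auto
    ultimately show "y \<in> h ` rad A" by force
  qed
qed

lemma iso_simple:
  assumes alg: "algebra A" and iso: "alg_iso A B h" and S: "simple_alg A"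
  shows "simple_alg B"
proof -
  interpret falg A by (rule falg.intro[OF alg])
  have algB: "algebra B" by (rule iso_algebra[OF alg iso])
  interpret B: falg B by (rule falg.intro[OF algB])
  note F = iso_facts[OF iso]
  have inj: "\<And>x y. x \<in> C \<Longrightarrow> y \<in> C \<Longrightarrow> h x = h y \<longleftrightarrow> x = y" using F(2) inj_on_eq_iff by metis
  let ?g = "inv_into C h"
  obtain x y where xy: "x \<in> C" "y \<in> C" "mu x y \<noteq> z" using S by (auto simp: simple_alg_def)
  have "amul B (h x) (h y) \<noteq> azero B" using xy by (simp add: F(3-6) inj)
  then have 1: "\<exists>x\<in>acarrier B. \<exists>y\<in>acarrier B. amul B x y \<noteq> azero B" using xy F(1) by blast
  have 2: "I = {azero B} \<or> I = acarrier B" if I: "alg_ideal B I" for I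
  proof -
    have "alg_ideal A (?g ` I)" by (rule iso_ideal[OF algB iso_inv[OF alg iso] I])
    then have c: "?g ` I = {z} \<or> ?g ` I = C" using S by (simp add: simple_alg_def)
    have IB: "I \<subseteq> h ` C" using B.ideal_sub[OF I] F(1) by simp
    have "h ` (?g ` I) = I" using IB by (force simp: image_image f_inv_into_f)
    then show ?thesis using c F(1,3) by auto
  qed
  show ?thesis using 1 2 by (simp add: simple_alg_def)
qed

lemma sub_algebra:
  assumes alg: "algebra A" and S: "subalgebra A S"
  shows "algebra (sub A S)"
proof -
  interpret falg A by (rule falg.intro[OF alg])
  have SC: "\<And>x. x \<in> S \<Longrightarrow> x \<in> C" using S by (auto simp: subalgebra_def)
  have cl: "\<And>x y. x \<in> S \<Longrightarrow> y \<in> S \<Longrightarrow> ad x y \<in> S \<and> mu x y \<in> S" "\<And>x c. x \<in> S \<Longrightarrow> sm c x \<in> S" "z \<in> S"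
    using S by (auto simp: subalgebra_def)
  show ?thesis
    unfolding algebra_def sub_simps
  proof (intro conjI)
    show "\<forall>x\<in>S. \<forall>y\<in>S. \<forall>w\<in>S. ad (ad x y) w = ad x (ad y w) \<and> mu (mu x y) w = mu x (mu y w) \<and>
        mu x (ad y w) = ad (mu x y) (mu x w) \<and> mu (ad x y) w = ad (mu x w) (mu y w)"
    proof (intro ballI conjI)
      fix x y w assume "x \<in> S" "y \<in> S" "w \<in> S"
      then have C: "x \<in> C" "y \<in> C" "w \<in> C" using SC by auto
      show "ad (ad x y) w = ad x (ad y w)" by (rule add_assoc[OF C])
      show "mu (mu x y) w = mu x (mu y w)" by (rule mul_assoc[OF C])
      show "mu x (ad y w) = ad (mu x y) (mu x w)" by (rule distl[OF C])
      show "mu (ad x y) w = ad (mu x w) (mu y w)" by (rule distr[OF C])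
    qed
    show "\<forall>x\<in>S. \<forall>y\<in>S. ad x y = ad y x"
    proof (intro ballI)
      fix x y assume "x \<in> S" "y \<in> S"
      then have C: "x \<in> C" "y \<in> C" using SC by auto
      show "ad x y = ad y x" by (rule add_comm[OF C])
    qed
    show "\<forall>x\<in>S. ad z x = x" using SC by simp
    show "\<forall>x\<in>S. \<exists>y\<in>S. ad x y = z"
    proof
      fix x assume x: "x \<in> S"
      then have "ad x (sm (-1) x) = z" using SC by simp
      then show "\<exists>y\<in>S. ad x y = z" using cl(2)[OF x] by blast
    qed
    show "\<forall>c d. \<forall>x\<in>S. \<forall>y\<in>S. sm c (ad x y) = ad (sm c x) (sm c y) \<and> sm (c + d) x = ad (sm c x) (sm d x) \<and>
        sm (c * d) x = sm c (sm d x) \<and> sm c (mu x y) = mu (sm c x) y \<and> sm c (mu x y) = mu x (sm c y)"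
    proof (intro allI ballI conjI)
      fix c d x y assume "x \<in> S" "y \<in> S"
      then have C: "x \<in> C" "y \<in> C" using SC by auto
      show "sm c (ad x y) = ad (sm c x) (sm c y)" by (rule sm_add[OF C])
      show "sm (c + d) x = ad (sm c x) (sm d x)" by (rule add_sm[OF C(1)])
      show "sm (c * d) x = sm c (sm d x)" by (rule sm_sm[OF C(1)])
      show "sm c (mu x y) = mu (sm c x) y" by (rule sm_mul_left[OF C])
      show "sm c (mu x y) = mu x (sm c y)" by (rule sm_mul_right[OF C])
    qed
    show "\<forall>x\<in>S. sm 1 x = x" using SC by simp
    show "z \<in> S" by (rule cl(3))
    show "\<forall>x\<in>S. \<forall>y\<in>S. ad x y \<in> S \<and> mu x y \<in> S" using cl(1) by blast
    show "\<forall>c. \<forall>x\<in>S. sm c x \<in> S" using cl(2) by blast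
  qed
qed

lemma iso_sub:
  assumes iso: "alg_iso A B h" and S: "S \<subseteq> acarrier A"
  shows "alg_iso (sub A S) (sub B (h ` S)) h"
proof -
  note F = iso_facts[OF iso]
  have "inj_on h S" using F(2) S by (rule inj_on_subset)
  then have b: "bij_betw h S (h ` S)" by (simp add: bij_betw_def)
  show ?thesis unfolding alg_iso_def sub_simps
  proof (intro conjI ballI allI)
    show "bij_betw h S (h ` S)" by (rule b)
    show "h (azero A) = azero B" using F(3) by simp
    fix x y assume "x \<in> S" "y \<in> S"
    then have C: "x \<in> acarrier A" "y \<in> acarrier A" using S by auto
    show "h (aadd A x y) = aadd B (h x) (h y)" using F(4)[OF C] by simp
    show "h (amul A x y) = amul B (h x) (h y)" using F(5)[OF C] by simp
  next
    fix c x assume "x \<in> S"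
    then have C: "x \<in> acarrier A" using S by auto
    show "h (asmult A c x) = asmult B c (h x)" using F(6)[OF C] by simp
  qed
qed


lemma iso_identity:
  assumes alg: "algebra A" and iso: "alg_iso A B h"
  shows "is_identity A f = is_identity B f"
proof -
  interpret falg A by (rule falg.intro[OF alg])
  have algB: "algebra B" by (rule iso_algebra[OF alg iso])
  interpret B: falg B by (rule falg.intro[OF algB])
  note F = iso_facts[OF iso]
  let ?g = "inv_into C h"
  have ii: "\<And>x. x \<in> C \<Longrightarrow> ?g (h x) = x" using F(2) inv_into_f_f by metis
  show ?thesis
  proof
    assume a: "is_identity A f"
    have s: "\<forall>y\<in>acarrier B. \<exists>x\<in>C. h x = y" using F(1) by auto
    show "is_identity B f" using identity_surj[OF iso_hom_on[OF iso] s a] .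
  next
    assume a: "is_identity B f"
    have s: "\<forall>y\<in>C. \<exists>x\<in>acarrier B. ?g x = y" using ii F(1) by auto
    show "is_identity A f" using B.identity_surj[OF iso_hom_on[OF iso_inv[OF alg iso]] s a] .
  qed
qed

lemma set_map2_sub: "set bs \<subseteq> S \<Longrightarrow> (\<forall>c. \<forall>b\<in>S. f c b \<in> S) \<Longrightarrow> set (map2 f cs bs) \<subseteq> S"
  by (auto dest!: set_zip_rightD)

lemma iso_findim:
  assumes alg: "algebra A" and iso: "alg_iso A B h" and fd: "fin_dim A"
  shows "fin_dim B"
proof -
  interpret falg A by (rule falg.intro[OF alg])
  note F = iso_facts[OF iso]
  obtain bs where bs: "set bs \<subseteq> C" "\<forall>x\<in>C. \<exists>cs. length cs = length bs \<and> x = lsum A (map2 sm cs bs)"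
    using fd by (auto simp: fin_dim_def)
  show ?thesis unfolding fin_dim_def
  proof (intro exI[of _ "map h bs"] conjI ballI)
    show "set (map h bs) \<subseteq> acarrier B" using bs F(1) by auto
    fix y assume "y \<in> acarrier B"
    then obtain x where x: "x \<in> C" "y = h x" using F(1) by auto
    then obtain cs where cs: "length cs = length bs" "x = lsum A (map2 sm cs bs)" using bs by auto
    have "h (lsum A (map2 sm cs bs)) = lsum B (map h (map2 sm cs bs))"
      by (rule hom_on_lsum[OF iso_hom_on[OF iso]]) (rule set_map2_sub, use bs in auto)
    also have "map h (map2 sm cs bs) = map2 (asmult B) cs (map h bs)"
      by (rule map_map2_hom) (use bs F(6) in auto)
    finally show "\<exists>cs. length cs = length (map h bs) \<and> y = lsum B (map2 (asmult B) cs (map h bs))"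
      using x cs by auto
  qed
qed

lemma iso_wm:
  assumes alg: "algebra A" and iso: "alg_iso A B h" and wm: "wm_decomp A Ts"
  shows "wm_decomp B (map ((`) h) Ts)"
proof -
  interpret falg A by (rule falg.intro[OF alg])
  have algB: "algebra B" by (rule iso_algebra[OF alg iso])
  interpret B: falg B by (rule falg.intro[OF algB])
  note F = iso_facts[OF iso]
  have inj: "\<And>x y. x \<in> C \<Longrightarrow> y \<in> C \<Longrightarrow> h x = h y \<longleftrightarrow> x = y" using F(2) inj_on_eq_iff by metis
  let ?g = "inv_into C h"
  have ii: "\<And>x. x \<in> C \<Longrightarrow> ?g (h x) = x" using F(2) inv_into_f_f by metis
  have TsS: "\<And>S. S \<in> set Ts \<Longrightarrow> subalgebra A S \<and> simple_alg (sub A S)" using wm by (simp add: wm_decomp_def)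
  have TsC: "\<And>i. i < length Ts \<Longrightarrow> Ts ! i \<subseteq> C" using TsS by (auto simp: subalgebra_def)
  have orth: "\<And>i j x y. i < length Ts \<Longrightarrow> j < length Ts \<Longrightarrow> i \<noteq> j \<Longrightarrow> x \<in> Ts ! i \<Longrightarrow> y \<in> Ts ! j \<Longrightarrow> mu x y = z"
    using wm by (simp add: wm_decomp_def)
  have ex0: "\<forall>x\<in>C. \<exists>bs j. length bs = length Ts \<and> (\<forall>i<length Ts. bs!i \<in> Ts!i) \<and> j \<in> rad A \<and> x = ad (lsum A bs) j"
    using wm unfolding wm_decomp_def by (elim conjE) assumption
  note ex = ex0[rule_format]
  have un: "\<And>bs j. length bs = length Ts \<Longrightarrow> (\<forall>i<length Ts. bs!i \<in> Ts!i) \<Longrightarrow> j \<in> rad A \<Longrightarrow>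
        ad (lsum A bs) j = z \<Longrightarrow> (\<forall>i<length Ts. bs!i = z) \<and> j = z"
    using wm unfolding wm_decomp_def by (elim conjE) blast
  have radB: "rad B = h ` rad A" by (rule iso_rad[OF alg iso])
  have bsC: "set bs \<subseteq> C" if "length bs = length Ts" "\<forall>i<length Ts. bs!i \<in> Ts!i" for bs
  proof
    fix t assume "t \<in> set bs"
    then obtain i where i: "i < length bs" "t = bs ! i" by (auto simp: in_set_conv_nth)
    then have "t \<in> Ts ! i" using that by simp
    then show "t \<in> C" using TsC[of i] that i by auto
  qed
  let ?T = "map ((`) h) Ts"
  show ?thesis unfolding wm_decomp_def
  proof (intro conjI)
   show "\<forall>S'\<in>set ?T. subalgebra B S' \<and> simple_alg (sub B S')"
   proof (intro ballI conjI)
    fix S' assume "S' \<in> set (map ((`) h) Ts)"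
    then obtain S where S: "S \<in> set Ts" "S' = h ` S" by auto
    have sa: "subalgebra A S" and si: "simple_alg (sub A S)" using TsS S by auto
    show "subalgebra B S'" using iso_subalg[OF alg iso sa] S by simp
    have SC: "S \<subseteq> C" using sa by (simp add: subalgebra_def)
    show "simple_alg (sub B S')"
      using iso_simple[OF sub_algebra[OF alg sa] iso_sub[OF iso SC] si] S by simp
   qed
   show "\<forall>i<length ?T. \<forall>j<length ?T. i \<noteq> j \<longrightarrow> (\<forall>x\<in>?T ! i. \<forall>y\<in>?T ! j. amul B x y = azero B)"
   proof (intro allI impI ballI)
    fix i j x y assume ij: "i < length (map ((`) h) Ts)" "j < length (map ((`) h) Ts)" "i \<noteq> j"
      and x: "x \<in> map ((`) h) Ts ! i" and y: "y \<in> map ((`) h) Ts ! j"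
    obtain x' where x': "x' \<in> Ts ! i" "x = h x'" using x ij by auto
    obtain y' where y': "y' \<in> Ts ! j" "y = h y'" using y ij by auto
    have C: "x' \<in> C" "y' \<in> C" using x' y' TsC ij by auto
    show "amul B x y = azero B" using orth[of i j x' y'] ij x' y' C by (simp add: F(3,5))
   qed
   show "\<forall>x\<in>acarrier B. \<exists>bs j. length bs = length ?T \<and> (\<forall>i<length ?T. bs ! i \<in> ?T ! i) \<and>
         j \<in> rad B \<and> x = aadd B (lsum B bs) j"
   proof
    fix x assume "x \<in> acarrier B"
    then obtain x' where x': "x' \<in> C" "x = h x'" using F(1) by auto
    obtain bs j where bj: "length bs = length Ts" "\<forall>i<length Ts. bs!i \<in> Ts!i" "j \<in> rad A" "x' = ad (lsum A bs) j"
      using ex[OF x'(1)] by blast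
    have sb: "set bs \<subseteq> C" using bsC bj by auto
    have jC: "j \<in> C" using bj rad_sub by auto
    have "x = aadd B (h (lsum A bs)) (h j)" using x' bj sb jC by (simp add: F(4))
    also have "h (lsum A bs) = lsum B (map h bs)" by (rule hom_on_lsum[OF iso_hom_on[OF iso] sb])
    finally have "x = aadd B (lsum B (map h bs)) (h j)" .
    moreover have "\<forall>i<length (map ((`) h) Ts). map h bs ! i \<in> map ((`) h) Ts ! i" using bj by auto
    moreover have "h j \<in> rad B" using radB bj by auto
    ultimately show "\<exists>bs j. length bs = length (map ((`) h) Ts) \<and> (\<forall>i<length (map ((`) h) Ts). bs ! i \<in> map ((`) h) Ts ! i) \<and>
         j \<in> rad B \<and> x = aadd B (lsum B bs) j"
      using bj by (intro exI[of _ "map h bs"] exI[of _ "h j"]) auto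
   qed
   show "\<forall>bs j. length bs = length ?T \<and> (\<forall>i<length ?T. bs ! i \<in> ?T ! i) \<and> j \<in> rad B \<and>
        aadd B (lsum B bs) j = azero B \<longrightarrow> (\<forall>i<length ?T. bs ! i = azero B) \<and> j = azero B"
   proof (intro allI impI)
    fix bs j assume a: "length bs = length (map ((`) h) Ts) \<and> (\<forall>i<length (map ((`) h) Ts). bs ! i \<in> map ((`) h) Ts ! i) \<and>
         j \<in> rad B \<and> aadd B (lsum B bs) j = azero B"
    define bs' where "bs' = map ?g bs"
    obtain j' where j': "j' \<in> rad A" "j = h j'" using a radB by auto
    have bs'i: "bs' ! i \<in> Ts ! i \<and> h (bs' ! i) = bs ! i" if i: "i < length Ts" for i
    proof -
      obtain t where t: "t \<in> Ts ! i" "bs ! i = h t" using a i by auto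
      then have "t \<in> C" using TsC i by auto
      then show ?thesis using t ii i a by (simp add: bs'_def)
    qed
    have lb: "length bs' = length Ts" using a by (simp add: bs'_def)
    have mb: "map h bs' = bs" using bs'i a lb by (intro nth_equalityI) auto
    have sb: "set bs' \<subseteq> C" using bsC lb bs'i by auto
    have jC: "j' \<in> C" using j' rad_sub by auto
    have "h (ad (lsum A bs') j') = aadd B (h (lsum A bs')) (h j')" using F(4)[of "lsum A bs'" j'] sb jC by simp
    also have "h (lsum A bs') = lsum B bs" using hom_on_lsum[OF iso_hom_on[OF iso] sb] mb by simp
    finally have "h (ad (lsum A bs') j') = aadd B (lsum B bs) j" using j' by simp
    also have "\<dots> = h z" using a F(3) by simp
    finally have "ad (lsum A bs') j' = z" using inj sb jC by simp
    then have zz: "(\<forall>i<length Ts. bs'!i = z) \<and> j' = z" using un[of bs' j'] lb bs'i j' by auto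
    have "\<forall>i<length (map ((`) h) Ts). bs ! i = azero B"
      using zz bs'i F(3) by auto
    moreover have "j = azero B" using zz j' F(3) by simp
    ultimately show "(\<forall>i<length ?T. bs ! i = azero B) \<and> j = azero B" by simp
   qed
  qed
qed

lemma iso_full:
  assumes iso: "alg_iso A B h" and fu: "full A"
  shows "full B"
proof -
  have alg: "algebra A" using fu by (simp add: full_def)
  interpret falg A by (rule falg.intro[OF alg])
  note F = iso_facts[OF iso]
  have inj: "\<And>x y. x \<in> C \<Longrightarrow> y \<in> C \<Longrightarrow> h x = h y \<longleftrightarrow> x = y" using F(2) inj_on_eq_iff by metis
  obtain Ts ts js where T: "wm_decomp A Ts" "Ts \<noteq> []" "length ts = length Ts" "length js + 1 = length Ts"
     "\<forall>i<length Ts. ts!i \<in> Ts!i" "set js \<subseteq> rad A" "lprod A (alternate ts js) \<noteq> z"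
    using fu unfolding full_def by blast
  have TsC: "\<And>i. i < length Ts \<Longrightarrow> Ts ! i \<subseteq> C" using T(1) by (auto simp: wm_decomp_def subalgebra_def)
  have tsC: "set ts \<subseteq> C"
  proof
    fix t assume "t \<in> set ts"
    then obtain i where "i < length ts" "t = ts ! i" by (auto simp: in_set_conv_nth)
    then have "t \<in> Ts ! i" using T(3,5) by simp
    then show "t \<in> C" using TsC[of i] T(3) \<open>i < length ts\<close> by auto
  qed
  have jsC: "set js \<subseteq> C" using T(6) rad_sub by auto
  have alC: "set (alternate ts js) \<subseteq> C" using set_alternate[of ts js] tsC jsC by auto
  have "lprod B (alternate (map h ts) (map h js)) = h (lprod A (alternate ts js))"
    using hom_on_lprod[OF iso_hom_on[OF iso] alC] unfolding map_alternate by simp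
  also have "\<dots> \<noteq> azero B" using T(7) inj alC F(3) by simp
  finally have ne: "lprod B (alternate (map h ts) (map h js)) \<noteq> azero B" .
  have a: "algebra B" by (rule iso_algebra[OF alg iso])
  have b: "fin_dim B" using iso_findim[OF alg iso] fu by (simp add: full_def)
  have c: "wm_decomp B (map ((`) h) Ts)" by (rule iso_wm[OF alg iso T(1)])
  have d: "set (map h js) \<subseteq> rad B" using iso_rad[OF alg iso] T(6) by auto
  have e: "map ((`) h) Ts \<noteq> []" using T(2) by simp
  have f: "length (map h ts) = length (map ((`) h) Ts)" using T(3) by simp
  have g: "length (map h js) + 1 = length (map ((`) h) Ts)" using T(4) by simp
  have k: "\<forall>i<length (map ((`) h) Ts). map h ts ! i \<in> map ((`) h) Ts ! i" using T(3,5) by simp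
  show ?thesis unfolding full_def using a b c d e f g k ne by blast
qed


lemma dsum_ghom: "i < n \<Longrightarrow> ghom (dsum T n) (T i) (\<lambda>g. g i)"
  by (simp add: ghom_def dsum_def)

lemma eval_dsum: "i < n \<Longrightarrow> eval_nc (dsum T n) f s i = eval_nc (T i) f (\<lambda>k. s k i)"
  using ghom_eval[OF dsum_ghom[of i n T], of f s] by (simp add: comp_def)

lemma lsum_dsum_out: "\<not> i < n \<Longrightarrow> lsum (dsum T n) xs i = undefined"
  by (induction xs) (auto simp: dsum_def)

lemma eval_dsum_out: "\<not> i < n \<Longrightarrow> eval_nc (dsum T n) f s i = undefined"
  by (simp add: eval_nc_def lsum_dsum_out)

lemma dsum_identity:
  assumes n: "n > 0" and z: "\<forall>i<n. azero (T i) \<in> acarrier (T i)"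
  shows "is_identity (dsum T n) f \<longleftrightarrow> (\<forall>i<n. is_identity (T i) f)"
proof
  assume id: "is_identity (dsum T n) f"
  show "\<forall>i<n. is_identity (T i) f"
  proof (intro allI impI)
    fix i assume i: "i < n"
    show "is_identity (T i) f" unfolding is_identity_def
    proof (intro conjI allI impI)
      show "\<forall>(c, w)\<in>set f. w \<noteq> []" using id by (simp add: is_identity_def)
      fix s assume s: "\<forall>k::nat. s k \<in> acarrier (T i)"
      define s' where "s' k = (\<lambda>j. if j = i then s k else if j < n then azero (T j) else undefined)" for k
      have "s' k \<in> acarrier (dsum T n)" for k using s z i by (auto simp: s'_def dsum_def)
      then have "eval_nc (dsum T n) f s' = azero (dsum T n)" using id by (simp add: is_identity_def)
      moreover have "azero (dsum T n) i = azero (T i)" using i by (simp add: dsum_def)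
      ultimately have "eval_nc (dsum T n) f s' i = azero (T i)" by simp
      moreover have "(\<lambda>k. s' k i) = s" by (simp add: s'_def)
      ultimately show "eval_nc (T i) f s = azero (T i)" using eval_dsum[OF i, of T f s'] by simp
    qed
  qed
next
  assume id: "\<forall>i<n. is_identity (T i) f"
  show "is_identity (dsum T n) f" unfolding is_identity_def
  proof (intro conjI allI impI)
    show "\<forall>(c, w)\<in>set f. w \<noteq> []" using id n by (simp add: is_identity_def)
    fix s assume s: "\<forall>k::nat. s k \<in> acarrier (dsum T n)"
    show "eval_nc (dsum T n) f s = azero (dsum T n)"
    proof
      fix i
      show "eval_nc (dsum T n) f s i = azero (dsum T n) i"
      proof (cases "i < n")
        case True
        have "\<forall>k. s k i \<in> acarrier (T i)" using s True by (simp add: dsum_def)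
        then have "eval_nc (T i) f (\<lambda>k. s k i) = azero (T i)" using id True by (simp add: is_identity_def)
        moreover have "azero (dsum T n) i = azero (T i)" using True by (simp add: dsum_def)
        ultimately show ?thesis using eval_dsum[OF True, of T f s] by simp
      next
        case False
        moreover have "azero (dsum T n) i = undefined" using False by (simp add: dsum_def)
        ultimately show ?thesis using eval_dsum_out[OF False, of T f s] by simp
      qed
    qed
  qed
qed

lemma prod_simps[simp]:
  "acarrier (prod_alg A B) = acarrier A \<times> acarrier B"
  "azero (prod_alg A B) = (azero A, azero B)"
  "aadd (prod_alg A B) (a, b) (c, d) = (aadd A a c, aadd B b d)"
  "amul (prod_alg A B) (a, b) (c, d) = (amul A a c, amul B b d)"
  "asmult (prod_alg A B) k (a, b) = (asmult A k a, asmult B k b)"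
  by (simp_all add: prod_alg_def)

lemma fst_ghom: "ghom (prod_alg A B) A fst"
  by (simp add: ghom_def prod_alg_def split_def)
lemma snd_ghom: "ghom (prod_alg A B) B snd"
  by (simp add: ghom_def prod_alg_def split_def)

lemma ball_prod: "(\<forall>x\<in>S \<times> T. P x) = (\<forall>a\<in>S. \<forall>b\<in>T. P (a, b))" by auto
lemma bex_prod: "(\<exists>x\<in>S \<times> T. P x) = (\<exists>a\<in>S. \<exists>b\<in>T. P (a, b))" by auto

lemma prod_algebra:
  assumes a: "algebra A" and b: "algebra B"
  shows "algebra (prod_alg A B)"
proof -
  interpret A: falg A by (rule falg.intro[OF a])
  interpret B: falg B by (rule falg.intro[OF b])
  show ?thesis
    unfolding algebra_def prod_simps(1) ball_prod bex_prod
  proof (intro conjI)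
    show "\<forall>a\<in>A.C. \<forall>b\<in>B.C. \<forall>a'\<in>A.C. \<forall>b'\<in>B.C. \<forall>a''\<in>A.C. \<forall>b''\<in>B.C.
        aadd (prod_alg A B) (aadd (prod_alg A B) (a, b) (a', b')) (a'', b'') = aadd (prod_alg A B) (a, b) (aadd (prod_alg A B) (a', b') (a'', b'')) \<and>
        amul (prod_alg A B) (amul (prod_alg A B) (a, b) (a', b')) (a'', b'') = amul (prod_alg A B) (a, b) (amul (prod_alg A B) (a', b') (a'', b'')) \<and>
        amul (prod_alg A B) (a, b) (aadd (prod_alg A B) (a', b') (a'', b'')) = aadd (prod_alg A B) (amul (prod_alg A B) (a, b) (a', b')) (amul (prod_alg A B) (a, b) (a'', b'')) \<and>
        amul (prod_alg A B) (aadd (prod_alg A B) (a, b) (a', b')) (a'', b'') = aadd (prod_alg A B) (amul (prod_alg A B) (a, b) (a'', b'')) (amul (prod_alg A B) (a', b') (a'', b''))"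
      by (simp add: A.add_assoc B.add_assoc A.mul_assoc B.mul_assoc A.distl B.distl A.distr B.distr)
    show "\<forall>a\<in>A.C. \<forall>b\<in>B.C. \<forall>a'\<in>A.C. \<forall>b'\<in>B.C. aadd (prod_alg A B) (a, b) (a', b') = aadd (prod_alg A B) (a', b') (a, b)"
    proof (intro ballI)
      fix a b a' b' assume "a \<in> A.C" "b \<in> B.C" "a' \<in> A.C" "b' \<in> B.C"
      then show "aadd (prod_alg A B) (a, b) (a', b') = aadd (prod_alg A B) (a', b') (a, b)"
        using A.add_comm[of a a'] B.add_comm[of b b'] by simp
    qed
    show "\<forall>a\<in>A.C. \<forall>b\<in>B.C. aadd (prod_alg A B) (azero (prod_alg A B)) (a, b) = (a, b)" by simp
    show "\<forall>a\<in>A.C. \<forall>b\<in>B.C. \<exists>a'\<in>A.C. \<exists>b'\<in>B.C. aadd (prod_alg A B) (a, b) (a', b') = azero (prod_alg A B)"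
    proof (intro ballI)
      fix a b assume "a \<in> A.C" "b \<in> B.C"
      then have "aadd (prod_alg A B) (a, b) (A.sm (-1) a, B.sm (-1) b) = azero (prod_alg A B)" by simp
      then show "\<exists>a'\<in>A.C. \<exists>b'\<in>B.C. aadd (prod_alg A B) (a, b) (a', b') = azero (prod_alg A B)"
        using \<open>a \<in> A.C\<close> \<open>b \<in> B.C\<close> by blast
    qed
    show "\<forall>c d. \<forall>a\<in>A.C. \<forall>b\<in>B.C. \<forall>a'\<in>A.C. \<forall>b'\<in>B.C.
        asmult (prod_alg A B) c (aadd (prod_alg A B) (a, b) (a', b')) = aadd (prod_alg A B) (asmult (prod_alg A B) c (a, b)) (asmult (prod_alg A B) c (a', b')) \<and>
        asmult (prod_alg A B) (c + d) (a, b) = aadd (prod_alg A B) (asmult (prod_alg A B) c (a, b)) (asmult (prod_alg A B) d (a, b)) \<and>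
        asmult (prod_alg A B) (c * d) (a, b) = asmult (prod_alg A B) c (asmult (prod_alg A B) d (a, b)) \<and>
        asmult (prod_alg A B) c (amul (prod_alg A B) (a, b) (a', b')) = amul (prod_alg A B) (asmult (prod_alg A B) c (a, b)) (a', b') \<and>
        asmult (prod_alg A B) c (amul (prod_alg A B) (a, b) (a', b')) = amul (prod_alg A B) (a, b) (asmult (prod_alg A B) c (a', b'))"
    proof (intro allI ballI conjI)
      fix c d a b a' b' assume C: "a \<in> A.C" "b \<in> B.C" "a' \<in> A.C" "b' \<in> B.C"
      show "asmult (prod_alg A B) c (aadd (prod_alg A B) (a, b) (a', b')) = aadd (prod_alg A B) (asmult (prod_alg A B) c (a, b)) (asmult (prod_alg A B) c (a', b'))"
        using C by (simp add: A.sm_add B.sm_add)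
      show "asmult (prod_alg A B) (c + d) (a, b) = aadd (prod_alg A B) (asmult (prod_alg A B) c (a, b)) (asmult (prod_alg A B) d (a, b))"
        using C by (simp add: A.add_sm B.add_sm)
      show "asmult (prod_alg A B) (c * d) (a, b) = asmult (prod_alg A B) c (asmult (prod_alg A B) d (a, b))"
        using C by (simp add: A.sm_sm B.sm_sm)
      show "asmult (prod_alg A B) c (amul (prod_alg A B) (a, b) (a', b')) = amul (prod_alg A B) (asmult (prod_alg A B) c (a, b)) (a', b')"
        using C A.sm_mul_left[of a a' c] B.sm_mul_left[of b b' c] by simp
      show "asmult (prod_alg A B) c (amul (prod_alg A B) (a, b) (a', b')) = amul (prod_alg A B) (a, b) (asmult (prod_alg A B) c (a', b'))"
        using C A.sm_mul_right[of a a' c] B.sm_mul_right[of b b' c] by simp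
    qed
  qed simp_all
qed


context falg begin

lemma wm_sub: "wm_decomp A Ts \<Longrightarrow> i < length Ts \<Longrightarrow> subalgebra A (Ts ! i)"
  by (simp add: wm_decomp_def)

lemma wm_bs_C:
  assumes wm: "wm_decomp A Ts" and l: "length bs = length Ts" and b: "\<forall>i<length Ts. bs!i \<in> Ts!i"
  shows "set bs \<subseteq> C"
proof
  fix t assume "t \<in> set bs"
  then obtain i where i: "i < length bs" "t = bs ! i" by (auto simp: in_set_conv_nth)
  then have "t \<in> Ts ! i" using l b by simp
  moreover have "Ts ! i \<subseteq> C" using wm_sub[OF wm] i l by (simp add: subalgebra_def)
  ultimately show "t \<in> C" by auto
qed

lemma ss_C: "wm_decomp A Ts \<Longrightarrow> ss_part A Ts \<subseteq> C"
  unfolding ss_part_def using wm_bs_C by blast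

lemma ss_zero: "wm_decomp A Ts \<Longrightarrow> z \<in> ss_part A Ts"
  unfolding ss_part_def
proof (intro CollectI exI conjI)
  assume wm: "wm_decomp A Ts"
  show "z = lsum A (replicate (length Ts) z)" by (simp add: lsum_zeros)
  show "length (replicate (length Ts) z) = length Ts" by simp
  show "\<forall>i<length Ts. replicate (length Ts) z ! i \<in> Ts ! i"
    using wm_sub[OF wm] by (simp add: subalgebra_def)
qed

lemma ss_add: "wm_decomp A Ts \<Longrightarrow> u \<in> ss_part A Ts \<Longrightarrow> v \<in> ss_part A Ts \<Longrightarrow> ad u v \<in> ss_part A Ts"
proof -
  assume wm: "wm_decomp A Ts" and "u \<in> ss_part A Ts" "v \<in> ss_part A Ts"
  then obtain bs bs' where b: "u = lsum A bs" "length bs = length Ts" "\<forall>i<length Ts. bs!i \<in> Ts!i"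
    "v = lsum A bs'" "length bs' = length Ts" "\<forall>i<length Ts. bs'!i \<in> Ts!i"
    unfolding ss_part_def by blast
  have C: "set bs \<subseteq> C" "set bs' \<subseteq> C" using wm_bs_C[OF wm] b by auto
  have "ad u v = lsum A (map2 ad bs bs')" using lsum_map2_add[of bs bs'] b C by simp
  moreover have "\<forall>i<length Ts. map2 ad bs bs' ! i \<in> Ts ! i"
    using b wm_sub[OF wm] by (simp add: subalgebra_def)
  ultimately show ?thesis unfolding ss_part_def using b by force
qed

lemma ss_sm: "wm_decomp A Ts \<Longrightarrow> u \<in> ss_part A Ts \<Longrightarrow> sm c u \<in> ss_part A Ts"
proof -
  assume wm: "wm_decomp A Ts" and "u \<in> ss_part A Ts"
  then obtain bs where b: "u = lsum A bs" "length bs = length Ts" "\<forall>i<length Ts. bs!i \<in> Ts!i"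
    unfolding ss_part_def by blast
  have C: "set bs \<subseteq> C" using wm_bs_C[OF wm] b by auto
  have "sm c u = lsum A (map (sm c) bs)" using lsum_sm[OF C] b by simp
  moreover have "\<forall>i<length Ts. map (sm c) bs ! i \<in> Ts ! i"
    using b wm_sub[OF wm] by (simp add: subalgebra_def)
  ultimately show ?thesis unfolding ss_part_def using b by force
qed

lemma ss_mul: "wm_decomp A Ts \<Longrightarrow> u \<in> ss_part A Ts \<Longrightarrow> v \<in> ss_part A Ts \<Longrightarrow> mu u v \<in> ss_part A Ts"
proof -
  assume wm: "wm_decomp A Ts" and "u \<in> ss_part A Ts" "v \<in> ss_part A Ts"
  then obtain bs bs' where b: "u = lsum A bs" "length bs = length Ts" "\<forall>i<length Ts. bs!i \<in> Ts!i"
    "v = lsum A bs'" "length bs' = length Ts" "\<forall>i<length Ts. bs'!i \<in> Ts!i"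
    unfolding ss_part_def by blast
  have C: "set bs \<subseteq> C" "set bs' \<subseteq> C" using wm_bs_C[OF wm] b by auto
  have orth: "\<And>i j x y. i < length Ts \<Longrightarrow> j < length Ts \<Longrightarrow> i \<noteq> j \<Longrightarrow> x \<in> Ts ! i \<Longrightarrow> y \<in> Ts ! j \<Longrightarrow> mu x y = z"
    using wm by (simp add: wm_decomp_def)
  have uC: "u \<in> C" using b C by simp
  have "mu u v = lsum A (map (mu u) bs')" using mul_lsum[OF uC C(2)] b by simp
  also have "map (mu u) bs' = map2 mu bs bs'"
  proof (rule nth_equalityI)
    show "length (map (mu u) bs') = length (map2 mu bs bs')" using b by simp
    fix j assume j: "j < length (map (mu u) bs')"
    then have j': "j < length Ts" using b by simp
    have yC: "bs' ! j \<in> C" using C j b by auto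
    have "mu u (bs' ! j) = lsum A (map (\<lambda>x. mu x (bs' ! j)) bs)" using lsum_mul[OF yC C(1)] b by simp
    also have "\<dots> = map (\<lambda>x. mu x (bs' ! j)) bs ! j"
    proof (rule lsum_single)
      show "set (map (\<lambda>x. mu x (bs' ! j)) bs) \<subseteq> C" using C yC by auto
      show "j < length (map (\<lambda>x. mu x (bs' ! j)) bs)" using j' b by simp
      show "\<forall>i<length (map (\<lambda>x. mu x (bs' ! j)) bs). i \<noteq> j \<longrightarrow> map (\<lambda>x. mu x (bs' ! j)) bs ! i = z"
        using orth b j' by auto
    qed
    finally show "map (mu u) bs' ! j = map2 mu bs bs' ! j" using j j' b by simp
  qed
  finally have e: "mu u v = lsum A (map2 mu bs bs')" .
  moreover have "\<forall>i<length Ts. map2 mu bs bs' ! i \<in> Ts ! i"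
    using b wm_sub[OF wm] by (simp add: subalgebra_def)
  ultimately show ?thesis unfolding ss_part_def using b by force
qed

lemma ss_rad: "wm_decomp A Ts \<Longrightarrow> u \<in> ss_part A Ts \<Longrightarrow> u \<in> rad A \<Longrightarrow> u = z"
proof -
  assume wm: "wm_decomp A Ts" and u: "u \<in> ss_part A Ts" "u \<in> rad A"
  then obtain bs where b: "u = lsum A bs" "length bs = length Ts" "\<forall>i<length Ts. bs!i \<in> Ts!i"
    unfolding ss_part_def by blast
  have C: "set bs \<subseteq> C" using wm_bs_C[OF wm] b by auto
  have uC: "u \<in> C" using b C by simp
  have r: "sm (-1) u \<in> rad A" using rad_sm u by simp
  have "ad (lsum A bs) (sm (-1) u) = z" using b uC by simp
  have un: "\<forall>bs j. length bs = length Ts \<and> (\<forall>i<length Ts. bs!i \<in> Ts!i) \<and> j \<in> rad A \<and>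
        ad (lsum A bs) j = z \<longrightarrow> (\<forall>i<length Ts. bs!i = z) \<and> j = z"
    using wm unfolding wm_decomp_def by (elim conjE) assumption
  then have "\<forall>i<length Ts. bs!i = z" using b r \<open>ad (lsum A bs) (sm (-1) u) = z\<close> by blast
  then have "\<forall>x\<in>set bs. x = z" using b by (auto simp: in_set_conv_nth)
  then show "u = z" using b lsum_zeros by simp
qed

lemma ss_dec: "wm_decomp A Ts \<Longrightarrow> x \<in> C \<Longrightarrow> \<exists>u\<in>ss_part A Ts. \<exists>j\<in>rad A. x = ad u j"
proof -
  assume wm: "wm_decomp A Ts" and x: "x \<in> C"
  have "\<forall>x\<in>C. \<exists>bs j. length bs = length Ts \<and> (\<forall>i<length Ts. bs!i \<in> Ts!i) \<and> j \<in> rad A \<and> x = ad (lsum A bs) j"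
    using wm unfolding wm_decomp_def by (elim conjE) assumption
  then obtain bs j where b: "length bs = length Ts" "\<forall>i<length Ts. bs!i \<in> Ts!i" "j \<in> rad A" "x = ad (lsum A bs) j"
    using x by blast
  have "lsum A bs \<in> ss_part A Ts" unfolding ss_part_def using b(1,2) by blast
  then show ?thesis using b(3,4) by blast
qed

end

locale sproj = falg A for A :: "('f::field, 'a) alg" +
  fixes SS :: "'a set"
  assumes SSC: "SS \<subseteq> acarrier A" and SSz: "azero A \<in> SS"
    and SSadd: "\<And>u v. u \<in> SS \<Longrightarrow> v \<in> SS \<Longrightarrow> aadd A u v \<in> SS"
    and SSsm: "\<And>u c. u \<in> SS \<Longrightarrow> asmult A c u \<in> SS"
    and SSmul: "\<And>u v. u \<in> SS \<Longrightarrow> v \<in> SS \<Longrightarrow> amul A u v \<in> SS"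
    and SSrad: "\<And>u. u \<in> SS \<Longrightarrow> u \<in> rad A \<Longrightarrow> u = azero A"
    and SSdec: "\<And>x. x \<in> acarrier A \<Longrightarrow> \<exists>u\<in>SS. \<exists>j\<in>rad A. x = aadd A u j"
begin

definition pr where "pr x = (SOME u. u \<in> SS \<and> (\<exists>j\<in>rad A. x = ad u j))"
definition rh where "rh x = ad x (sm (-1) (pr x))"

lemma RC: "j \<in> rad A \<Longrightarrow> j \<in> C" using rad_sub by auto
lemma SC': "u \<in> SS \<Longrightarrow> u \<in> C" using SSC by auto

lemma dec_unique:
  assumes u: "u \<in> SS" "u' \<in> SS" and j: "j \<in> rad A" "j' \<in> rad A" and e: "ad u j = ad u' j'"
  shows "u = u' \<and> j = j'"
proof -
  have C: "u \<in> C" "u' \<in> C" "j \<in> C" "j' \<in> C" using u j SC' RC by auto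
  define d where "d = ad j' (sm (-1) j)"
  have dR: "d \<in> rad A" unfolding d_def using j rad_add rad_sm by auto
  have dC: "d \<in> C" using C d_def by simp
  have "u = ad (ad u' j') (sm (-1) j)" using eq_sub[OF C(1) C(3) e] .
  also have "\<dots> = ad u' d" unfolding d_def using C add_assoc by simp
  finally have "u = ad u' d" .
  then have "ad d u' = u" using add_comm C dC by simp
  then have "d = ad u (sm (-1) u')" using eq_sub[OF dC C(2)] by simp
  then have "d \<in> SS" using u SSadd SSsm by simp
  then have "d = z" using SSrad dR by simp
  then have uu: "u = u'" using \<open>u = ad u' d\<close> C by simp
  then have "ad u j = ad u j'" using e by simp
  then have "j = j'" using add_left_cancel C by blast
  then show ?thesis using uu by simp
qed

lemma pr_rh:
  assumes x: "x \<in> C"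
  shows "pr x \<in> SS \<and> rh x \<in> rad A \<and> x = ad (pr x) (rh x)"
proof -
  have "\<exists>u. u \<in> SS \<and> (\<exists>j\<in>rad A. x = ad u j)" using SSdec[OF x] by blast
  then have p: "pr x \<in> SS \<and> (\<exists>j\<in>rad A. x = ad (pr x) j)" unfolding pr_def by (rule someI_ex)
  then obtain j where j: "j \<in> rad A" "x = ad (pr x) j" by blast
  have C: "pr x \<in> C" "j \<in> C" using p j SC' RC by auto
  have "ad j (pr x) = x" using j C add_comm by simp
  then have "j = rh x" unfolding rh_def using eq_sub[OF C(2) C(1)] by simp
  then show ?thesis using p j by simp
qed

lemma pr_C: "x \<in> C \<Longrightarrow> pr x \<in> C" using pr_rh SC' by blast
lemma pr_SS: "x \<in> C \<Longrightarrow> pr x \<in> SS" using pr_rh by blast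
lemma rh_R: "x \<in> C \<Longrightarrow> rh x \<in> rad A" using pr_rh by blast
lemma rh_C: "x \<in> C \<Longrightarrow> rh x \<in> C" using rh_R RC by blast

lemma pr_eq: assumes "u \<in> SS" "j \<in> rad A" shows "pr (ad u j) = u" and "rh (ad u j) = j"
proof -
  have x: "ad u j \<in> C" using assms SC' RC by simp
  have "ad u j = ad (pr (ad u j)) (rh (ad u j))" using pr_rh[OF x] by simp
  then have "u = pr (ad u j) \<and> j = rh (ad u j)" using dec_unique assms pr_rh[OF x] by blast
  then show "pr (ad u j) = u" "rh (ad u j) = j" by auto
qed

lemma pr_id: "u \<in> SS \<Longrightarrow> pr u = u" using pr_eq(1)[of u z] SC' by simp
lemma pr_rad: "j \<in> rad A \<Longrightarrow> pr j = z" using pr_eq(1)[of z j] SSz RC by simp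
lemma rh_rad: "j \<in> rad A \<Longrightarrow> rh j = j" using pr_eq(2)[of z j] SSz RC by simp
lemma rh_SS: "u \<in> SS \<Longrightarrow> rh u = z" using pr_eq(2)[of u z] SC' by simp

lemma pr_add: assumes x: "x \<in> C" and y: "y \<in> C"
  shows "pr (ad x y) = ad (pr x) (pr y)" and "rh (ad x y) = ad (rh x) (rh y)"
proof -
  have "ad x y = ad (ad (pr x) (rh x)) (ad (pr y) (rh y))" using pr_rh x y by simp
  also have "\<dots> = ad (ad (pr x) (pr y)) (ad (rh x) (rh y))"
    using add_swap4 pr_C rh_C x y by simp
  finally have e: "ad x y = ad (ad (pr x) (pr y)) (ad (rh x) (rh y))" .
  have s: "ad (pr x) (pr y) \<in> SS" using SSadd pr_SS x y by simp
  have r: "ad (rh x) (rh y) \<in> rad A" using rad_add rh_R x y by simp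
  show "pr (ad x y) = ad (pr x) (pr y)" using pr_eq(1)[OF s r] e by simp
  show "rh (ad x y) = ad (rh x) (rh y)" using pr_eq(2)[OF s r] e by simp
qed

lemma pr_sm: assumes x: "x \<in> C"
  shows "pr (sm c x) = sm c (pr x)" and "rh (sm c x) = sm c (rh x)"
proof -
  have "sm c x = sm c (ad (pr x) (rh x))" using pr_rh[OF x] by simp
  also have "\<dots> = ad (sm c (pr x)) (sm c (rh x))" using sm_add pr_C[OF x] rh_C[OF x] by simp
  finally have "sm c x = ad (sm c (pr x)) (sm c (rh x))" .
  moreover have s: "sm c (pr x) \<in> SS" using SSsm pr_SS x by simp
  moreover have r: "sm c (rh x) \<in> rad A" using rad_sm rh_R x by simp
  ultimately show "pr (sm c x) = sm c (pr x)" "rh (sm c x) = sm c (rh x)" using pr_eq by auto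
qed

lemma pr_mul: assumes x: "x \<in> C" and y: "y \<in> C"
  shows "pr (mu x y) = mu (pr x) (pr y)"
proof -
  let ?u = "pr x" and ?j = "rh x" and ?u' = "pr y" and ?j' = "rh y"
  have C: "?u \<in> C" "?j \<in> C" "?u' \<in> C" "?j' \<in> C" using pr_C rh_C x y by auto
  have "mu x y = mu (ad ?u ?j) (ad ?u' ?j')" using pr_rh x y by simp
  also have "\<dots> = ad (mu ?u (ad ?u' ?j')) (mu ?j (ad ?u' ?j'))" using distr C by simp
  also have "mu ?u (ad ?u' ?j') = ad (mu ?u ?u') (mu ?u ?j')" using distl C by simp
  also have "ad (ad (mu ?u ?u') (mu ?u ?j')) (mu ?j (ad ?u' ?j')) = ad (mu ?u ?u') (ad (mu ?u ?j') (mu ?j (ad ?u' ?j')))"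
    using add_assoc C by simp
  finally have e: "mu x y = ad (mu ?u ?u') (ad (mu ?u ?j') (mu ?j (ad ?u' ?j')))" .
  have s: "mu ?u ?u' \<in> SS" using SSmul pr_SS x y by simp
  have r: "ad (mu ?u ?j') (mu ?j (ad ?u' ?j')) \<in> rad A"
    using rad_add rad_mul rh_R x y C by simp
  show ?thesis using pr_eq(1)[OF s r] e by simp
qed

lemma pr_zero: "pr z = z" using pr_id SSz by simp

end

lemma (in falg) wm_sproj:
  assumes wm: "wm_decomp A Ts" shows "sproj A (ss_part A Ts)"
proof (rule sproj.intro)
  show "falg A" by (rule falg.intro[OF alg])
  show "sproj_axioms A (ss_part A Ts)"
  proof
    show "ss_part A Ts \<subseteq> C" by (rule ss_C[OF wm])
    show "z \<in> ss_part A Ts" by (rule ss_zero[OF wm])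
    show "\<And>u v. u \<in> ss_part A Ts \<Longrightarrow> v \<in> ss_part A Ts \<Longrightarrow> ad u v \<in> ss_part A Ts" by (rule ss_add[OF wm])
    show "\<And>u c. u \<in> ss_part A Ts \<Longrightarrow> sm c u \<in> ss_part A Ts" by (rule ss_sm[OF wm])
    show "\<And>u v. u \<in> ss_part A Ts \<Longrightarrow> v \<in> ss_part A Ts \<Longrightarrow> mu u v \<in> ss_part A Ts" by (rule ss_mul[OF wm])
    show "\<And>u. u \<in> ss_part A Ts \<Longrightarrow> u \<in> rad A \<Longrightarrow> u = z" by (rule ss_rad[OF wm])
    show "\<And>x. x \<in> C \<Longrightarrow> \<exists>u\<in>ss_part A Ts. \<exists>j\<in>rad A. x = ad u j" by (rule ss_dec[OF wm])
  qed
qed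


definition lin_on :: "('f, 'a) alg \<Rightarrow> ('f, 'b) alg \<Rightarrow> ('a \<Rightarrow> 'b) \<Rightarrow> bool" where
  "lin_on A B h \<longleftrightarrow> h (azero A) = azero B \<and>
     (\<forall>x\<in>acarrier A. \<forall>y\<in>acarrier A. h (aadd A x y) = aadd B (h x) (h y)) \<and>
     (\<forall>c. \<forall>x\<in>acarrier A. h (asmult A c x) = asmult B c (h x))"

lemma ghom_hom_on: "ghom A B h \<Longrightarrow> hom_on A B h"
  by (simp add: ghom_def hom_on_def)

context falg begin

lemma lin_lsum: "lin_on A B h \<Longrightarrow> set xs \<subseteq> C \<Longrightarrow> h (lsum A xs) = lsum B (map h xs)"
  by (induction xs) (auto simp: lin_on_def)

lemma lin_comb:
  assumes h: "lin_on A B h" and bs: "set bs \<subseteq> C"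
  shows "lsum B (map2 (asmult B) cs (map h bs)) = h (lsum A (map2 sm cs bs))"
proof -
  have s: "set (map2 sm cs bs) \<subseteq> C" by (rule set_map2_sub) (use bs in auto)
  have "h (lsum A (map2 sm cs bs)) = lsum B (map h (map2 sm cs bs))" by (rule lin_lsum[OF h s])
  also have "map h (map2 sm cs bs) = map2 (asmult B) cs (map h bs)"
    by (rule map_map2_hom) (use bs h in \<open>auto simp: lin_on_def\<close>)
  finally show ?thesis by simp
qed

end

lemma lift_list:
  assumes "set xs \<subseteq> h ` S"
  shows "\<exists>ys. set ys \<subseteq> S \<and> map h ys = xs"
  using assms
proof (induction xs)
  case Nil then show ?case by simp
next
  case (Cons x xs)
  then obtain ys where "set ys \<subseteq> S" "map h ys = xs" by auto
  moreover obtain y where "y \<in> S" "h y = x" using Cons.prems by auto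
  ultimately show ?case by (intro exI[of _ "y # ys"]) auto
qed

lemma ghom_ideal:
  assumes h: "ghom F T h" and surj: "\<forall>x\<in>acarrier T. \<exists>q\<in>acarrier F. h q = x"
    and into: "h ` acarrier F \<subseteq> acarrier T"
    and I: "alg_ideal F I" "nilpotent_set F I"
  shows "alg_ideal T (h ` I) \<and> nilpotent_set T (h ` I)"
proof -
  have IF: "I \<subseteq> acarrier F" using I by (simp add: alg_ideal_def subalgebra_def)
  have hz: "h (azero F) = azero T" and ha: "\<And>x y. h (aadd F x y) = aadd T (h x) (h y)"
    and hm: "\<And>x y. h (amul F x y) = amul T (h x) (h y)" and hs: "\<And>c x. h (asmult F c x) = asmult T c (h x)"
    using h by (auto simp: ghom_def)
  have cl: "\<And>x y. x \<in> I \<Longrightarrow> y \<in> I \<Longrightarrow> aadd F x y \<in> I \<and> amul F x y \<in> I" "\<And>x c. x \<in> I \<Longrightarrow> asmult F c x \<in> I"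
    "azero F \<in> I" "\<And>x y. x \<in> acarrier F \<Longrightarrow> y \<in> I \<Longrightarrow> amul F x y \<in> I \<and> amul F y x \<in> I"
    using I by (auto simp: alg_ideal_def subalgebra_def)
  have id: "alg_ideal T (h ` I)"
    unfolding alg_ideal_def subalgebra_def
  proof (intro conjI ballI allI)
    show "h ` I \<subseteq> acarrier T" using IF into by auto
    show "azero T \<in> h ` I" using cl(3) hz by force
    fix x y assume "x \<in> h ` I" "y \<in> h ` I"
    then obtain a b where "a \<in> I" "b \<in> I" "x = h a" "y = h b" by auto
    then show "aadd T x y \<in> h ` I" "amul T x y \<in> h ` I" using cl(1) ha hm by (metis imageI)+
  next
    fix c x assume "x \<in> h ` I"
    then obtain a where "a \<in> I" "x = h a" by auto
    then show "asmult T c x \<in> h ` I" using cl(2) hs by (metis imageI)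
  next
    fix x y assume x: "x \<in> acarrier T" and "y \<in> h ` I"
    then obtain b where b: "b \<in> I" "y = h b" by auto
    obtain q where q: "q \<in> acarrier F" "h q = x" using surj x by auto
    show "amul T x y \<in> h ` I" using cl(4)[OF q(1) b(1)] hm q b by (metis imageI)
    show "amul T y x \<in> h ` I" using cl(4)[OF q(1) b(1)] hm q b by (metis imageI)
  qed
  obtain m where m: "m > 0" "\<forall>xs. length xs = m \<longrightarrow> set xs \<subseteq> I \<longrightarrow> lprod F xs = azero F"
    using I(2) by (auto simp: nilpotent_set_def)
  have "nilpotent_set T (h ` I)"
    unfolding nilpotent_set_def
  proof (intro exI[of _ m] conjI allI impI)
    show "m > 0" by fact
    fix xs assume l: "length xs = m" and s: "set xs \<subseteq> h ` I"
    obtain ys where ys: "set ys \<subseteq> I" "map h ys = xs" using lift_list[OF s] by blast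
    have "lprod T xs = h (lprod F ys)" using ghom_lprod[OF h, of ys] ys by simp
    also have "lprod F ys = azero F" using m ys l by auto
    finally show "lprod T xs = azero T" using hz by simp
  qed
  then show ?thesis using id by simp
qed


locale fus =
  fixes T1 :: "('f::field, 'b) alg" and T2 :: "('f, 'c) alg"
    and Ts1 :: "'b set list" and Ts2 :: "'c set list" and \<phi> :: "'b \<Rightarrow> 'c"
  assumes alg1: "algebra T1" and alg2: "algebra T2"
    and wm1: "wm_decomp T1 Ts1" and wm2: "wm_decomp T2 Ts2"
    and phi: "alg_iso (sub T1 (ss_part T1 Ts1)) (sub T2 (ss_part T2 Ts2)) \<phi>"
begin

sublocale P1: sproj T1 "ss_part T1 Ts1" by (rule falg.wm_sproj[OF falg.intro[OF alg1] wm1])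
sublocale P2: sproj T2 "ss_part T2 Ts2" by (rule falg.wm_sproj[OF falg.intro[OF alg2] wm2])

abbreviation "S1 \<equiv> ss_part T1 Ts1"
abbreviation "S2 \<equiv> ss_part T2 Ts2"

lemma phS: "u \<in> S1 \<Longrightarrow> \<phi> u \<in> S2"
  using phi by (auto simp: alg_iso_def bij_betw_def)
lemma phimg: "\<phi> ` S1 = S2" using phi by (simp add: alg_iso_def bij_betw_def)
lemma phsurj: "v \<in> S2 \<Longrightarrow> \<exists>u\<in>S1. \<phi> u = v"
  using phimg by (metis imageE)
lemma phz: "\<phi> P1.z = P2.z" using phi by (simp add: alg_iso_def)
lemma phadd: "u \<in> S1 \<Longrightarrow> v \<in> S1 \<Longrightarrow> \<phi> (P1.ad u v) = P2.ad (\<phi> u) (\<phi> v)"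
  using phi by (simp add: alg_iso_def)
lemma phmul: "u \<in> S1 \<Longrightarrow> v \<in> S1 \<Longrightarrow> \<phi> (P1.mu u v) = P2.mu (\<phi> u) (\<phi> v)"
  using phi by (simp add: alg_iso_def)
lemma phsm: "u \<in> S1 \<Longrightarrow> \<phi> (P1.sm c u) = P2.sm c (\<phi> u)"
  using phi by (simp add: alg_iso_def)
lemma phinv: "v \<in> S2 \<Longrightarrow> inv_into S1 \<phi> v \<in> S1 \<and> \<phi> (inv_into S1 \<phi> v) = v"
proof -
  assume "v \<in> S2"
  then have v: "v \<in> \<phi> ` S1" using phimg by simp
  show ?thesis using inv_into_into[OF v] f_inv_into_f[OF v] by simp
qed

definition f1 where "f1 x = \<phi> (P1.pr x)"

lemma f1_S2: "x \<in> P1.C \<Longrightarrow> f1 x \<in> S2" unfolding f1_def using phS P1.pr_SS by blast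
lemma f1_C: "x \<in> P1.C \<Longrightarrow> f1 x \<in> P2.C" using f1_S2 P2.SC' by blast
lemma f1_z: "f1 P1.z = P2.z" unfolding f1_def using P1.pr_zero phz by simp
lemma f1_add: "x \<in> P1.C \<Longrightarrow> y \<in> P1.C \<Longrightarrow> f1 (P1.ad x y) = P2.ad (f1 x) (f1 y)"
  unfolding f1_def using P1.pr_add phadd P1.pr_SS by simp
lemma f1_mul: "x \<in> P1.C \<Longrightarrow> y \<in> P1.C \<Longrightarrow> f1 (P1.mu x y) = P2.mu (f1 x) (f1 y)"
  unfolding f1_def using P1.pr_mul phmul P1.pr_SS by simp
lemma f1_sm: "x \<in> P1.C \<Longrightarrow> f1 (P1.sm c x) = P2.sm c (f1 x)"
  unfolding f1_def using P1.pr_sm phsm P1.pr_SS by simp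
lemma f1_rad: "j \<in> rad T1 \<Longrightarrow> f1 j = P2.z" unfolding f1_def using P1.pr_rad phz by simp
lemma pr2_f1: "x \<in> P1.C \<Longrightarrow> P2.pr (f1 x) = f1 x" using P2.pr_id f1_S2 by blast

definition G where "G = {(x, y). x \<in> P1.C \<and> y \<in> P2.C \<and> P2.pr y = f1 x}"

lemma G_mem: "(x, y) \<in> G \<longleftrightarrow> x \<in> P1.C \<and> y \<in> P2.C \<and> P2.pr y = f1 x"
  by (simp add: G_def)

lemma fusion_eq: "fusion T1 T2 S1 \<phi> = sub (prod_alg T1 T2) G"
proof -
  have "{(aadd T1 u j1, aadd T2 (\<phi> u) j2) | u j1 j2. u \<in> S1 \<and> j1 \<in> rad T1 \<and> j2 \<in> rad T2} = G"
  proof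
    show "{(aadd T1 u j1, aadd T2 (\<phi> u) j2) | u j1 j2. u \<in> S1 \<and> j1 \<in> rad T1 \<and> j2 \<in> rad T2} \<subseteq> G"
    proof
      fix p assume "p \<in> {(aadd T1 u j1, aadd T2 (\<phi> u) j2) | u j1 j2. u \<in> S1 \<and> j1 \<in> rad T1 \<and> j2 \<in> rad T2}"
      then obtain u j1 j2 where p: "p = (aadd T1 u j1, aadd T2 (\<phi> u) j2)" "u \<in> S1" "j1 \<in> rad T1" "j2 \<in> rad T2" by blast
      have pu: "P1.pr (P1.ad u j1) = u" using P1.pr_eq p by simp
      have pv: "P2.pr (P2.ad (\<phi> u) j2) = \<phi> u" using P2.pr_eq p phS by simp
      have "P1.ad u j1 \<in> P1.C" using p P1.SC' P1.RC by simp
      moreover have "P2.ad (\<phi> u) j2 \<in> P2.C" using p P2.SC' P2.RC phS by simp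
      ultimately show "p \<in> G" using p pu pv by (simp add: G_def f1_def)
    qed
    show "G \<subseteq> {(aadd T1 u j1, aadd T2 (\<phi> u) j2) | u j1 j2. u \<in> S1 \<and> j1 \<in> rad T1 \<and> j2 \<in> rad T2}"
    proof
      fix p assume "p \<in> G"
      then obtain x y where p: "p = (x, y)" "x \<in> P1.C" "y \<in> P2.C" "P2.pr y = \<phi> (P1.pr x)"
        by (auto simp: G_def f1_def)
      have "x = P1.ad (P1.pr x) (P1.rh x)" "y = P2.ad (\<phi> (P1.pr x)) (P2.rh y)"
        using P1.pr_rh[OF p(2)] P2.pr_rh[OF p(3)] p(4) by auto
      then show "p \<in> {(aadd T1 u j1, aadd T2 (\<phi> u) j2) | u j1 j2. u \<in> S1 \<and> j1 \<in> rad T1 \<and> j2 \<in> rad T2}"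
        using p P1.pr_SS P1.rh_R P2.rh_R by blast
    qed
  qed
  then show ?thesis by (simp add: fusion_def sub_def)
qed

abbreviation "FF \<equiv> sub (prod_alg T1 T2) G"

lemma G_sub: "subalgebra (prod_alg T1 T2) G"
  unfolding subalgebra_def
proof (intro conjI ballI allI)
  show "G \<subseteq> acarrier (prod_alg T1 T2)" by (auto simp: G_def)
  show "azero (prod_alg T1 T2) \<in> G" using f1_z P2.pr_zero by (simp add: G_def)
  fix p q assume p: "p \<in> G" and q: "q \<in> G"
  obtain x y where pp: "p = (x, y)" "x \<in> P1.C" "y \<in> P2.C" "P2.pr y = f1 x" using p by (auto simp: G_def)
  obtain x' y' where qq: "q = (x', y')" "x' \<in> P1.C" "y' \<in> P2.C" "P2.pr y' = f1 x'" using q by (auto simp: G_def)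
  show "aadd (prod_alg T1 T2) p q \<in> G"
    using pp qq by (simp add: G_def P2.pr_add f1_add)
  show "amul (prod_alg T1 T2) p q \<in> G"
    using pp qq by (simp add: G_def P2.pr_mul f1_mul)
next
  fix c p assume p: "p \<in> G"
  obtain x y where pp: "p = (x, y)" "x \<in> P1.C" "y \<in> P2.C" "P2.pr y = f1 x" using p by (auto simp: G_def)
  show "asmult (prod_alg T1 T2) c p \<in> G"
    using pp by (simp add: G_def P2.pr_sm f1_sm)
qed

lemma FF_alg: "algebra FF"
  by (rule sub_algebra[OF prod_algebra[OF alg1 alg2] G_sub])

sublocale FA: falg FF by (rule falg.intro[OF FF_alg])

definition psi where "psi x = (x, f1 x)"

lemma psi_G: "x \<in> P1.C \<Longrightarrow> psi x \<in> G"
  unfolding psi_def G_def using f1_C pr2_f1 by simp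

lemma psi_hom: "hom_on T1 FF psi"
  unfolding hom_on_def psi_def using f1_z f1_add f1_mul f1_sm by simp

lemma psi_inj: "inj psi" unfolding psi_def inj_def by simp

definition lift2 where "lift2 y = (inv_into S1 \<phi> (P2.pr y), y)"

lemma lift2_G: "y \<in> P2.C \<Longrightarrow> lift2 y \<in> G"
proof -
  assume y: "y \<in> P2.C"
  have "P2.pr y \<in> S2" using P2.pr_SS y by simp
  then have u: "inv_into S1 \<phi> (P2.pr y) \<in> S1" "\<phi> (inv_into S1 \<phi> (P2.pr y)) = P2.pr y" using phinv by auto
  have "f1 (inv_into S1 \<phi> (P2.pr y)) = P2.pr y" using u P1.pr_id by (simp add: f1_def)
  then show ?thesis using y u P1.SC' by (simp add: lift2_def G_def)
qed

lemma fst_ghomF: "ghom FF T1 fst" using fst_ghom by (simp add: ghom_def)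
lemma snd_ghomF: "ghom FF T2 snd" using snd_ghom by (simp add: ghom_def)

lemma G_C: "p \<in> G \<Longrightarrow> fst p \<in> P1.C \<and> snd p \<in> P2.C" by (auto simp: G_def)

lemma rad_FF_sub: "p \<in> rad FF \<Longrightarrow> fst p \<in> rad T1 \<and> snd p \<in> rad T2"
proof -
  assume "p \<in> rad FF"
  then obtain I where I: "alg_ideal FF I" "nilpotent_set FF I" "p \<in> I" unfolding rad_def by blast
  have s1: "\<forall>x\<in>P1.C. \<exists>q\<in>acarrier FF. fst q = x" using psi_G by (force simp: psi_def)
  have s2: "\<forall>x\<in>P2.C. \<exists>q\<in>acarrier FF. snd q = x" using lift2_G by (force simp: lift2_def)
  have i1: "fst ` acarrier FF \<subseteq> P1.C" and i2: "snd ` acarrier FF \<subseteq> P2.C" using G_C by auto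
  have "alg_ideal T1 (fst ` I) \<and> nilpotent_set T1 (fst ` I)" by (rule ghom_ideal[OF fst_ghomF s1 i1 I(1,2)])
  then have "fst p \<in> rad T1" using I(3) unfolding rad_def by blast
  moreover have "alg_ideal T2 (snd ` I) \<and> nilpotent_set T2 (snd ` I)" by (rule ghom_ideal[OF snd_ghomF s2 i2 I(1,2)])
  then have "snd p \<in> rad T2" using I(3) unfolding rad_def by blast
  ultimately show ?thesis by simp
qed

lemma rad_FF_sup:
  assumes j1: "j1 \<in> rad T1" and j2: "j2 \<in> rad T2"
  shows "(j1, j2) \<in> rad FF"
proof -
  obtain I1 where I1: "alg_ideal T1 I1" "nilpotent_set T1 I1" "j1 \<in> I1" using j1 unfolding rad_def by blast
  obtain I2 where I2: "alg_ideal T2 I2" "nilpotent_set T2 I2" "j2 \<in> I2" using j2 unfolding rad_def by blast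
  have I1R: "I1 \<subseteq> rad T1" and I2R: "I2 \<subseteq> rad T2" using I1 I2 unfolding rad_def by blast+
  have c1: "\<And>x y. x \<in> I1 \<Longrightarrow> y \<in> I1 \<Longrightarrow> P1.ad x y \<in> I1 \<and> P1.mu x y \<in> I1" "\<And>x c. x \<in> I1 \<Longrightarrow> P1.sm c x \<in> I1"
    "P1.z \<in> I1" "\<And>x y. x \<in> P1.C \<Longrightarrow> y \<in> I1 \<Longrightarrow> P1.mu x y \<in> I1 \<and> P1.mu y x \<in> I1"
    using I1 by (auto simp: alg_ideal_def subalgebra_def)
  have c2: "\<And>x y. x \<in> I2 \<Longrightarrow> y \<in> I2 \<Longrightarrow> P2.ad x y \<in> I2 \<and> P2.mu x y \<in> I2" "\<And>x c. x \<in> I2 \<Longrightarrow> P2.sm c x \<in> I2"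
    "P2.z \<in> I2" "\<And>x y. x \<in> P2.C \<Longrightarrow> y \<in> I2 \<Longrightarrow> P2.mu x y \<in> I2 \<and> P2.mu y x \<in> I2"
    using I2 by (auto simp: alg_ideal_def subalgebra_def)
  let ?I = "I1 \<times> I2"
  have IG: "?I \<subseteq> G"
  proof
    fix p assume "p \<in> ?I"
    then obtain a b where p: "p = (a, b)" "a \<in> rad T1" "b \<in> rad T2" using I1R I2R by auto
    then show "p \<in> G" using P1.RC P2.RC P2.pr_rad f1_rad by (simp add: G_def)
  qed
  have idI: "alg_ideal FF ?I"
    unfolding alg_ideal_def subalgebra_def sub_simps
  proof (intro conjI ballI allI)
    show "?I \<subseteq> G" by (rule IG)
    show "azero (prod_alg T1 T2) \<in> ?I" using c1(3) c2(3) by simp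
    fix p q assume "p \<in> ?I" "q \<in> ?I"
    then obtain a b a' b' where "p = (a, b)" "q = (a', b')" "a \<in> I1" "b \<in> I2" "a' \<in> I1" "b' \<in> I2" by auto
    then show "aadd (prod_alg T1 T2) p q \<in> ?I" "amul (prod_alg T1 T2) p q \<in> ?I" using c1 c2 by auto
  next
    fix c p assume "p \<in> ?I"
    then obtain a b where "p = (a, b)" "a \<in> I1" "b \<in> I2" by auto
    then show "asmult (prod_alg T1 T2) c p \<in> ?I" using c1 c2 by auto
  next
    fix p q assume "p \<in> G" "q \<in> ?I"
    then obtain x y a b where "p = (x, y)" "x \<in> P1.C" "y \<in> P2.C" "q = (a, b)" "a \<in> I1" "b \<in> I2"
      by (auto simp: G_def)
    then show "amul (prod_alg T1 T2) p q \<in> ?I" "amul (prod_alg T1 T2) q p \<in> ?I" using c1(4) c2(4) by auto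
  qed
  obtain m1 where m1: "m1 > 0" "\<forall>xs. length xs \<ge> m1 \<longrightarrow> set xs \<subseteq> I1 \<longrightarrow> lprod T1 xs = P1.z"
    using P1.nil_long[OF I1(1,2)] by blast
  obtain m2 where m2: "m2 > 0" "\<forall>xs. length xs \<ge> m2 \<longrightarrow> set xs \<subseteq> I2 \<longrightarrow> lprod T2 xs = P2.z"
    using P2.nil_long[OF I2(1,2)] by blast
  have "nilpotent_set FF ?I"
    unfolding nilpotent_set_def
  proof (intro exI[of _ "max m1 m2"] conjI allI impI)
    show "max m1 m2 > 0" using m1 by simp
    fix xs assume l: "length xs = max m1 m2" and s: "set xs \<subseteq> ?I"
    have "fst (lprod FF xs) = lprod T1 (map fst xs)" by (rule ghom_lprod[OF fst_ghomF])
    also have "\<dots> = P1.z"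
    proof -
      have "set (map fst xs) \<subseteq> I1" using s by auto
      moreover have "m1 \<le> length (map fst xs)" using l by simp
      ultimately show ?thesis using m1(2) by blast
    qed
    finally have a: "fst (lprod FF xs) = P1.z" .
    have "snd (lprod FF xs) = lprod T2 (map snd xs)" by (rule ghom_lprod[OF snd_ghomF])
    also have "\<dots> = P2.z"
    proof -
      have "set (map snd xs) \<subseteq> I2" using s by auto
      moreover have "m2 \<le> length (map snd xs)" using l by simp
      ultimately show ?thesis using m2(2) by blast
    qed
    finally have b: "snd (lprod FF xs) = P2.z" .
    show "lprod FF xs = azero FF" using a b by (simp add: prod_eq_iff)
  qed
  then show ?thesis using idI I1(3) I2(3) unfolding rad_def by blast
qed

lemma eval_FF: "eval_nc FF f s = (eval_nc T1 f (fst \<circ> s), eval_nc T2 f (snd \<circ> s))"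
  using ghom_eval[OF fst_ghomF, of f s] ghom_eval[OF snd_ghomF, of f s] by (simp add: prod_eq_iff)

lemma id_FF: "is_identity T1 f \<Longrightarrow> is_identity T2 f \<Longrightarrow> is_identity FF f"
  unfolding is_identity_def
proof (intro conjI allI impI)
  assume a: "(\<forall>(c, w)\<in>set f. w \<noteq> []) \<and> (\<forall>s. (\<forall>i. s i \<in> P1.C) \<longrightarrow> eval_nc T1 f s = P1.z)"
     and b: "(\<forall>(c, w)\<in>set f. w \<noteq> []) \<and> (\<forall>s. (\<forall>i. s i \<in> P2.C) \<longrightarrow> eval_nc T2 f s = P2.z)"
  show "\<forall>(c, w)\<in>set f. w \<noteq> []" using a by simp
  fix s assume s: "\<forall>i::nat. s i \<in> acarrier FF"
  have "\<forall>i. (fst \<circ> s) i \<in> P1.C" "\<forall>i. (snd \<circ> s) i \<in> P2.C" using s G_C by auto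
  then show "eval_nc FF f s = azero FF" using a b eval_FF by simp
qed

lemma id_T1: "is_identity FF f \<Longrightarrow> is_identity T1 f"
  by (rule FA.identity_surj[OF ghom_hom_on[OF fst_ghomF]]) (use psi_G in \<open>force simp: psi_def\<close>)

end


lemma map2_append: "length cs = length xs \<Longrightarrow> map2 g (cs @ ds) (xs @ ys) = map2 g cs xs @ map2 g ds ys"
  by (simp add: zip_append)

context fus begin

lemma f1_lin: "lin_on T1 T2 f1"
  unfolding lin_on_def using f1_z f1_add f1_sm by simp

lemma rh2_lin: "lin_on T2 T2 P2.rh"
  unfolding lin_on_def using P2.rh_rad[OF P2.zero_rad] P2.pr_add(2) P2.pr_sm(2) by simp

lemma FF_findim:
  assumes fd1: "fin_dim T1" and fd2: "fin_dim T2"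
  shows "fin_dim FF"
proof -
  obtain bs1 where b1: "set bs1 \<subseteq> P1.C" "\<forall>x\<in>P1.C. \<exists>cs. length cs = length bs1 \<and> x = lsum T1 (map2 P1.sm cs bs1)"
    using fd1 by (auto simp: fin_dim_def)
  obtain bs2 where b2: "set bs2 \<subseteq> P2.C" "\<forall>x\<in>P2.C. \<exists>cs. length cs = length bs2 \<and> x = lsum T2 (map2 P2.sm cs bs2)"
    using fd2 by (auto simp: fin_dim_def)
  define L where "L = map psi bs1 @ map (\<lambda>b. (P1.z, P2.rh b)) bs2"
  have LG: "set L \<subseteq> G"
  proof -
    have "set (map psi bs1) \<subseteq> G" using psi_G b1 by auto
    moreover have "(P1.z, P2.rh b) \<in> G" if "b \<in> P2.C" for b
      using that P2.rh_C P2.pr_rad P2.rh_R f1_z by (simp add: G_def)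
    then have "set (map (\<lambda>b. (P1.z, P2.rh b)) bs2) \<subseteq> G" using b2 by auto
    ultimately show ?thesis by (simp add: L_def)
  qed
  have mf: "map fst L = bs1 @ replicate (length bs2) P1.z" by (simp add: L_def psi_def comp_def map_replicate_const)
  have ms: "map snd L = map f1 bs1 @ map P2.rh bs2" by (simp add: L_def psi_def comp_def)
  have fsm: "\<forall>b\<in>set L. \<forall>c. fst (asmult FF c b) = asmult T1 c (fst b)" by (simp add: prod_alg_def split_def)
  have ssm: "\<forall>b\<in>set L. \<forall>c. snd (asmult FF c b) = asmult T2 c (snd b)" by (simp add: prod_alg_def split_def)
  show ?thesis unfolding fin_dim_def
  proof (intro exI[of _ L] conjI ballI)
    show "set L \<subseteq> acarrier FF" using LG by simp
    fix p assume "p \<in> acarrier FF"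
    then obtain x y where p: "p = (x, y)" "x \<in> P1.C" "y \<in> P2.C" "P2.pr y = f1 x" by (auto simp: G_def)
    obtain cs where cs: "length cs = length bs1" "x = lsum T1 (map2 P1.sm cs bs1)" using b1 p by blast
    obtain ds where ds: "length ds = length bs2" "y = lsum T2 (map2 P2.sm ds bs2)" using b2 p by blast
    let ?Q = "lsum FF (map2 (asmult FF) (cs @ ds) L)"
    have "fst ?Q = lsum T1 (map fst (map2 (asmult FF) (cs @ ds) L))" by (rule ghom_lsum[OF fst_ghomF])
    also have "map fst (map2 (asmult FF) (cs @ ds) L) = map2 P1.sm (cs @ ds) (map fst L)"
      by (rule map_map2_hom[OF fsm])
    also have "\<dots> = map2 P1.sm cs bs1 @ map2 P1.sm ds (replicate (length bs2) P1.z)"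
      unfolding mf using map2_append cs by simp
    also have "lsum T1 \<dots> = P1.ad (lsum T1 (map2 P1.sm cs bs1)) (lsum T1 (map2 P1.sm ds (replicate (length bs2) P1.z)))"
    proof (rule P1.lsum_append)
      show "set (map2 P1.sm cs bs1) \<subseteq> P1.C" by (rule set_map2_sub) (use b1 in auto)
      show "set (map2 P1.sm ds (replicate (length bs2) P1.z)) \<subseteq> P1.C" by (rule set_map2_sub) auto
    qed
    also have "lsum T1 (map2 P1.sm ds (replicate (length bs2) P1.z)) = P1.z"
      by (rule P1.lsum_zeros) (auto dest!: set_zip_rightD)
    finally have f: "fst ?Q = x" using cs p by simp
    have "snd ?Q = lsum T2 (map snd (map2 (asmult FF) (cs @ ds) L))" by (rule ghom_lsum[OF snd_ghomF])
    also have "map snd (map2 (asmult FF) (cs @ ds) L) = map2 P2.sm (cs @ ds) (map snd L)"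
      by (rule map_map2_hom[OF ssm])
    also have "\<dots> = map2 P2.sm cs (map f1 bs1) @ map2 P2.sm ds (map P2.rh bs2)"
      unfolding ms using map2_append cs by simp
    also have "lsum T2 \<dots> = P2.ad (lsum T2 (map2 P2.sm cs (map f1 bs1))) (lsum T2 (map2 P2.sm ds (map P2.rh bs2)))"
    proof (rule P2.lsum_append)
      show "set (map2 P2.sm cs (map f1 bs1)) \<subseteq> P2.C" by (rule set_map2_sub) (use b1 f1_C in auto)
      show "set (map2 P2.sm ds (map P2.rh bs2)) \<subseteq> P2.C" by (rule set_map2_sub) (use b2 P2.rh_C in auto)
    qed
    also have "lsum T2 (map2 P2.sm cs (map f1 bs1)) = f1 (lsum T1 (map2 P1.sm cs bs1))"
      by (rule P1.lin_comb[OF f1_lin b1(1)])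
    also have "lsum T2 (map2 P2.sm ds (map P2.rh bs2)) = P2.rh (lsum T2 (map2 P2.sm ds bs2))"
      by (rule P2.lin_comb[OF rh2_lin b2(1)])
    finally have "snd ?Q = P2.ad (f1 x) (P2.rh y)" using cs ds by simp
    then have s: "snd ?Q = y" using P2.pr_rh[OF p(3)] p(4) by simp
    have "p = ?Q" using f s p by (simp add: prod_eq_iff)
    then show "\<exists>cs. length cs = length L \<and> p = lsum FF (map2 (asmult FF) cs L)"
      using cs ds by (intro exI[of _ "cs @ ds"]) (simp add: L_def)
  qed
qed

lemma psi_iso:
  assumes S: "S \<subseteq> P1.C"
  shows "alg_iso (sub T1 S) (sub FF (psi ` S)) psi"
proof -
  have "inj_on psi S" using psi_inj by (auto intro: inj_on_subset)
  then have b: "bij_betw psi S (psi ` S)" by (simp add: bij_betw_def)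
  have h: "hom_on T1 FF psi" by (rule psi_hom)
  show ?thesis unfolding alg_iso_def sub_simps
  proof (intro conjI ballI allI)
    show "bij_betw psi S (psi ` S)" by (rule b)
    show "psi P1.z = azero (prod_alg T1 T2)" using h by (simp add: hom_on_def)
    fix x y assume "x \<in> S" "y \<in> S"
    then have C: "x \<in> P1.C" "y \<in> P1.C" using S by auto
    show "psi (P1.ad x y) = aadd (prod_alg T1 T2) (psi x) (psi y)" using h C by (simp add: hom_on_def)
    show "psi (P1.mu x y) = amul (prod_alg T1 T2) (psi x) (psi y)" using h C by (simp add: hom_on_def)
  next
    fix c x assume "x \<in> S"
    then have C: "x \<in> P1.C" using S by auto
    show "psi (P1.sm c x) = asmult (prod_alg T1 T2) c (psi x)" using h C by (simp add: hom_on_def)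
  qed
qed

lemma psi_z: "psi P1.z = azero FF" using psi_hom by (simp add: hom_on_def)

lemma FF_wm:
  assumes wmT: "wm_decomp T1 Ts"
  shows "wm_decomp FF (map ((`) psi) Ts)"
proof -
  let ?T = "map ((`) psi) Ts"
  have h: "hom_on T1 FF psi" by (rule psi_hom)
  have TsS: "\<And>S. S \<in> set Ts \<Longrightarrow> subalgebra T1 S \<and> simple_alg (sub T1 S)" using wmT by (simp add: wm_decomp_def)
  have TsC: "\<And>i. i < length Ts \<Longrightarrow> Ts ! i \<subseteq> P1.C" using P1.wm_sub[OF wmT] by (simp add: subalgebra_def)
  have orth: "\<forall>i<length Ts. \<forall>j<length Ts. i \<noteq> j \<longrightarrow> (\<forall>x\<in>Ts!i. \<forall>y\<in>Ts!j. P1.mu x y = P1.z)"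
    using wmT unfolding wm_decomp_def by (elim conjE) assumption
  have ex: "\<forall>x\<in>P1.C. \<exists>bs j. length bs = length Ts \<and> (\<forall>i<length Ts. bs!i \<in> Ts!i) \<and> j \<in> rad T1 \<and> x = P1.ad (lsum T1 bs) j"
    using wmT unfolding wm_decomp_def by (elim conjE) assumption
  have un: "\<forall>bs j. length bs = length Ts \<and> (\<forall>i<length Ts. bs!i \<in> Ts!i) \<and> j \<in> rad T1 \<and>
        P1.ad (lsum T1 bs) j = P1.z \<longrightarrow> (\<forall>i<length Ts. bs!i = P1.z) \<and> j = P1.z"
    using wmT unfolding wm_decomp_def by (elim conjE) assumption
  show ?thesis unfolding wm_decomp_def
  proof (intro conjI)
    show "\<forall>S'\<in>set ?T. subalgebra FF S' \<and> simple_alg (sub FF S')"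
    proof
      fix S' assume "S' \<in> set ?T"
      then obtain S where S: "S \<in> set Ts" "S' = psi ` S" by auto
      have sa: "subalgebra T1 S" and si: "simple_alg (sub T1 S)" using TsS S(1) by auto
      have SC: "S \<subseteq> P1.C" using sa by (simp add: subalgebra_def)
      have cl: "\<And>x y. x \<in> S \<Longrightarrow> y \<in> S \<Longrightarrow> P1.ad x y \<in> S \<and> P1.mu x y \<in> S" "\<And>x c. x \<in> S \<Longrightarrow> P1.sm c x \<in> S" "P1.z \<in> S"
        using sa by (auto simp: subalgebra_def)
      have "subalgebra FF (psi ` S)" unfolding subalgebra_def
      proof (intro conjI ballI allI)
        show "psi ` S \<subseteq> acarrier FF" using SC psi_G by auto
        show "azero FF \<in> psi ` S" using cl(3) psi_z by (metis imageI)
        fix p q assume "p \<in> psi ` S" "q \<in> psi ` S"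
        then obtain x y where xy: "x \<in> S" "y \<in> S" "p = psi x" "q = psi y" by auto
        then have C: "x \<in> P1.C" "y \<in> P1.C" using SC by auto
        have "aadd FF p q = psi (P1.ad x y)" "amul FF p q = psi (P1.mu x y)" using h C xy by (auto simp: hom_on_def)
        then show "aadd FF p q \<in> psi ` S" "amul FF p q \<in> psi ` S" using cl(1)[OF xy(1,2)] by auto
      next
        fix c p assume "p \<in> psi ` S"
        then obtain x where x: "x \<in> S" "p = psi x" by auto
        then have "asmult FF c p = psi (P1.sm c x)" using h SC by (auto simp: hom_on_def)
        then show "asmult FF c p \<in> psi ` S" using cl(2)[OF x(1)] by auto
      qed
      moreover have "simple_alg (sub FF (psi ` S))"
        by (rule iso_simple[OF sub_algebra[OF alg1 sa] psi_iso[OF SC] si])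
      ultimately show "subalgebra FF S' \<and> simple_alg (sub FF S')" using S by simp
    qed
    show "\<forall>i<length ?T. \<forall>j<length ?T. i \<noteq> j \<longrightarrow> (\<forall>x\<in>?T ! i. \<forall>y\<in>?T ! j. amul FF x y = azero FF)"
    proof (intro allI impI ballI)
      fix i j p q assume ij: "i < length ?T" "j < length ?T" "i \<noteq> j" and p: "p \<in> ?T ! i" and q: "q \<in> ?T ! j"
      obtain x where x: "x \<in> Ts ! i" "p = psi x" using p ij by auto
      obtain y where y: "y \<in> Ts ! j" "q = psi y" using q ij by auto
      have C: "x \<in> P1.C" "y \<in> P1.C" using x y TsC ij by auto
      have "amul FF p q = psi (P1.mu x y)" using h C x y by (simp add: hom_on_def)
      also have "P1.mu x y = P1.z" using orth ij x y by simp
      finally show "amul FF p q = azero FF" using psi_z by simp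
    qed
    show "\<forall>p\<in>acarrier FF. \<exists>bs j. length bs = length ?T \<and> (\<forall>i<length ?T. bs ! i \<in> ?T ! i) \<and>
         j \<in> rad FF \<and> p = aadd FF (lsum FF bs) j"
    proof
      fix p assume "p \<in> acarrier FF"
      then obtain x y where p: "p = (x, y)" "x \<in> P1.C" "y \<in> P2.C" "P2.pr y = f1 x" by (auto simp: G_def)
      obtain bs r where b: "length bs = length Ts" "\<forall>i<length Ts. bs!i \<in> Ts!i" "r \<in> rad T1" "x = P1.ad (lsum T1 bs) r"
        using ex p(2) by blast
      have sb: "set bs \<subseteq> P1.C" using P1.wm_bs_C[OF wmT b(1,2)] .
      have rC: "r \<in> P1.C" using b(3) P1.RC by simp
      have uC: "lsum T1 bs \<in> P1.C" using sb by simp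
      have ls: "lsum FF (map psi bs) = psi (lsum T1 bs)" using P1.hom_on_lsum[OF h sb] by simp
      have "f1 x = P2.ad (f1 (lsum T1 bs)) (f1 r)" using b(4) f1_add uC rC by simp
      then have fx: "f1 x = f1 (lsum T1 bs)" using f1_rad[OF b(3)] f1_C[OF uC] by simp
      have "aadd FF (psi (lsum T1 bs)) (r, P2.rh y) = (P1.ad (lsum T1 bs) r, P2.ad (f1 (lsum T1 bs)) (P2.rh y))"
        by (simp add: psi_def)
      also have "\<dots> = (x, y)" using b(4) fx p(4) P2.pr_rh[OF p(3)] by simp
      finally have e: "p = aadd FF (lsum FF (map psi bs)) (r, P2.rh y)" using ls p by simp
      have jr: "(r, P2.rh y) \<in> rad FF" using rad_FF_sup b(3) P2.rh_R p(3) by simp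
      show "\<exists>bs j. length bs = length ?T \<and> (\<forall>i<length ?T. bs ! i \<in> ?T ! i) \<and> j \<in> rad FF \<and> p = aadd FF (lsum FF bs) j"
        using e jr b(1,2) by (intro exI[of _ "map psi bs"] exI[of _ "(r, P2.rh y)"]) auto
    qed
    show "\<forall>bs j. length bs = length ?T \<and> (\<forall>i<length ?T. bs ! i \<in> ?T ! i) \<and> j \<in> rad FF \<and>
        aadd FF (lsum FF bs) j = azero FF \<longrightarrow> (\<forall>i<length ?T. bs ! i = azero FF) \<and> j = azero FF"
    proof (intro allI impI)
      fix bs j assume a: "length bs = length ?T \<and> (\<forall>i<length ?T. bs ! i \<in> ?T ! i) \<and> j \<in> rad FF \<and>
        aadd FF (lsum FF bs) j = azero FF"
      have l: "length bs = length Ts" using a by simp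
      have bi: "fst (bs ! i) \<in> Ts ! i \<and> bs ! i = psi (fst (bs ! i))" if i: "i < length Ts" for i
      proof -
        obtain t where "t \<in> Ts ! i" "bs ! i = psi t" using a i by auto
        then show ?thesis by (simp add: psi_def)
      qed
      have jr: "fst j \<in> rad T1" "snd j \<in> rad T2" using rad_FF_sub a by auto
      have "fst (aadd FF (lsum FF bs) j) = P1.ad (fst (lsum FF bs)) (fst j)" by (simp add: prod_alg_def split_def)
      also have "fst (lsum FF bs) = lsum T1 (map fst bs)" by (rule ghom_lsum[OF fst_ghomF])
      finally have "P1.ad (lsum T1 (map fst bs)) (fst j) = P1.z" using a by simp
      then have zz: "(\<forall>i<length Ts. map fst bs ! i = P1.z) \<and> fst j = P1.z"
        using un[rule_format, of "map fst bs" "fst j"] l bi jr(1) by simp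
      have bz: "bs ! i = azero FF" if i: "i < length Ts" for i
        using bi[OF i] zz i l psi_z by simp
      have "snd (aadd FF (lsum FF bs) j) = P2.ad (snd (lsum FF bs)) (snd j)" by (simp add: prod_alg_def split_def)
      also have "snd (lsum FF bs) = lsum T2 (map snd bs)" by (rule ghom_lsum[OF snd_ghomF])
      also have "lsum T2 (map snd bs) = P2.z"
      proof (rule P2.lsum_zeros)
        show "\<forall>x\<in>set (map snd bs). x = P2.z" using bz l by (auto simp: in_set_conv_nth)
      qed
      finally have "P2.ad P2.z (snd j) = P2.z" using a by simp
      then have "snd j = P2.z" using jr(2) P2.RC by simp
      then have "j = azero FF" using zz by (simp add: prod_eq_iff)
      then show "(\<forall>i<length ?T. bs ! i = azero FF) \<and> j = azero FF" using bz l by simp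
    qed
  qed
qed

lemma FF_full:
  assumes f1: "full T1" and fd2: "fin_dim T2"
  shows "full FF"
proof -
  obtain Ts ts js where T: "wm_decomp T1 Ts" "Ts \<noteq> []" "length ts = length Ts" "length js + 1 = length Ts"
     "\<forall>i<length Ts. ts!i \<in> Ts!i" "set js \<subseteq> rad T1" "lprod T1 (alternate ts js) \<noteq> P1.z"
    using f1 unfolding full_def by blast
  have fd1: "fin_dim T1" using f1 by (simp add: full_def)
  let ?ts = "map psi ts" and ?js = "map (\<lambda>j. (j, P2.z)) js"
  have "fst (lprod FF (alternate ?ts ?js)) = lprod T1 (map fst (alternate ?ts ?js))" by (rule ghom_lprod[OF fst_ghomF])
  also have "map fst (alternate ?ts ?js) = alternate ts js" by (simp add: map_alternate comp_def psi_def)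
  finally have "fst (lprod FF (alternate ?ts ?js)) \<noteq> P1.z" using T(7) by simp
  then have ne: "lprod FF (alternate ?ts ?js) \<noteq> azero FF" by auto
  have a: "algebra FF" by (rule FF_alg)
  have b: "fin_dim FF" by (rule FF_findim[OF fd1 fd2])
  have c: "wm_decomp FF (map ((`) psi) Ts)" by (rule FF_wm[OF T(1)])
  have d: "set ?js \<subseteq> rad FF" using T(6) rad_FF_sup P2.zero_rad by auto
  have e: "map ((`) psi) Ts \<noteq> []" using T(2) by simp
  have f: "length ?ts = length (map ((`) psi) Ts)" using T(3) by simp
  have g: "length ?js + 1 = length (map ((`) psi) Ts)" using T(4) by simp
  have k: "\<forall>i<length (map ((`) psi) Ts). ?ts ! i \<in> map ((`) psi) Ts ! i" using T(3,5) by simp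
  show ?thesis unfolding full_def using a b c d e f g k ne by blast
qed

end


lemma full_alg: "full T \<Longrightarrow> algebra T" by (simp add: full_def)
lemma full_zero: "full T \<Longrightarrow> azero T \<in> acarrier T"
  using full_alg falg.zero_closed falg.intro by blast

theorem lemma2p9:
  fixes A :: "('f::field_char_0, 'a) alg"
    and P1 :: "nat \<Rightarrow> ('f, 'b) alg" and n1 k1 :: nat
    and P2 :: "nat \<Rightarrow> ('f, 'c) alg" and n2 k2 :: nat
    and Ts1 :: "'b set list" and Ts2 :: "'c set list"
    and \<phi> :: "'b \<Rightarrow> 'c"
    and P1' :: "nat \<Rightarrow> ('f, 'd) alg"
  assumes alg_closed: "\<forall>p :: 'f poly. degree p > 0 \<longrightarrow> (\<exists>x. poly p x = 0)"
    and A: "algebra A" "fin_dim A"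
    and P1: "presentation A P1 n1" and k1: "k1 < n1"
    and P2: "presentation A P2 n2" and k2: "k2 < n2"
    and wm1: "wm_decomp (P1 k1) Ts1"
    and wm2: "wm_decomp (P2 k2) Ts2"
    and phi: "alg_iso (sub (P1 k1) (ss_part (P1 k1) Ts1)) (sub (P2 k2) (ss_part (P2 k2) Ts2)) \<phi>"
    and repl: "\<exists>h. alg_iso (fusion (P1 k1) (P2 k2) (ss_part (P1 k1) Ts1) \<phi>) (P1' k1) h"
    and keep: "\<forall>i<n1. i \<noteq> k1 \<longrightarrow> (\<exists>h. alg_iso (P1 i) (P1' i) h)"
  shows "presentation A P1' n1"
proof -
  have full1: "\<forall>i<n1. full (P1 i)" and pe1: "pi_equiv A (dsum P1 n1)" using P1 by (auto simp: presentation_def)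
  have full2: "\<forall>i<n2. full (P2 i)" and pe2: "pi_equiv A (dsum P2 n2)" using P2 by (auto simp: presentation_def)
  have alg1: "algebra (P1 k1)" using full1 k1 full_alg by blast
  have alg2: "algebra (P2 k2)" using full2 k2 full_alg by blast
  have fd2: "fin_dim (P2 k2)" using full2 k2 by (simp add: full_def)
  interpret F: fus "P1 k1" "P2 k2" Ts1 Ts2 \<phi>
    by (rule fus.intro[OF alg1 alg2 wm1 wm2 phi])
  obtain h where h: "alg_iso F.FF (P1' k1) h" using repl F.fusion_eq by auto
  have fullF: "full F.FF" using F.FF_full full1 k1 fd2 by blast
  have full': "\<forall>i<n1. full (P1' i)"
  proof (intro allI impI)
    fix i assume i: "i < n1"
    show "full (P1' i)"
    proof (cases "i = k1")
      case True then show ?thesis using iso_full[OF h fullF] by simp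
    next
      case False
      then obtain g where "alg_iso (P1 i) (P1' i) g" using keep i by blast
      then show ?thesis using iso_full full1 i by blast
    qed
  qed
  have n1: "n1 > 0" using k1 by simp
  have n2: "n2 > 0" using k2 by simp
  have z1: "\<forall>i<n1. azero (P1 i) \<in> acarrier (P1 i)" using full1 full_zero by blast
  have z2: "\<forall>i<n2. azero (P2 i) \<in> acarrier (P2 i)" using full2 full_zero by blast
  have z1': "\<forall>i<n1. azero (P1' i) \<in> acarrier (P1' i)" using full' full_zero by blast
  have "pi_equiv A (dsum P1' n1)" unfolding pi_equiv_def
  proof
    fix f
    have e1: "is_identity A f = (\<forall>i<n1. is_identity (P1 i) f)"
      using pe1 dsum_identity[OF n1 z1] by (simp add: pi_equiv_def)
    have e2: "is_identity A f = (\<forall>i<n2. is_identity (P2 i) f)"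
      using pe2 dsum_identity[OF n2 z2] by (simp add: pi_equiv_def)
    have e1': "is_identity (dsum P1' n1) f = (\<forall>i<n1. is_identity (P1' i) f)"
      using dsum_identity[OF n1 z1'] by simp
    have ek: "is_identity (P1' k1) f = is_identity F.FF f"
      using iso_identity[OF F.FF_alg h] by simp
    have eo: "is_identity (P1' i) f = is_identity (P1 i) f" if i: "i < n1" "i \<noteq> k1" for i
    proof -
      obtain g where g: "alg_iso (P1 i) (P1' i) g" using keep i by blast
      have "algebra (P1 i)" using full1 i full_alg by blast
      then show ?thesis using iso_identity[OF _ g] by simp
    qed
    show "is_identity A f = is_identity (dsum P1' n1) f"
    proof
      assume a: "is_identity A f"
      then have "is_identity (P1 k1) f" "is_identity (P2 k2) f" using e1 e2 k1 k2 by auto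
      then have "is_identity F.FF f" using F.id_FF by blast
      then have "\<forall>i<n1. is_identity (P1' i) f" using ek eo e1 a by (metis)
      then show "is_identity (dsum P1' n1) f" using e1' by simp
    next
      assume a: "is_identity (dsum P1' n1) f"
      then have b: "\<forall>i<n1. is_identity (P1' i) f" using e1' by simp
      then have "is_identity (P1 k1) f" using ek F.id_T1 k1 by blast
      then have "\<forall>i<n1. is_identity (P1 i) f" using b eo by metis
      then show "is_identity A f" using e1 by simp
    qed
  qed
  then show ?thesis using full' by (simp add: presentation_def)
qed


end
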